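(* Let $N$ be a nonnegative integer and let $f,a_1,d_1,d_2\in\mathbb{C}$ be such that every hypergeometric series below is well defined (no lower parameter is a nonpositive integer) and all denominators in the definitions of $h$ and $k$ below are nonzero. Put $$h=\frac{\frac f2\,(f-1-d_1-d_2+N)(1-\frac f2)}{\frac f2(\frac f2-1)-a_1(2f-2-d_1-d_2-a_1+N)},\qquad k=\frac{h(1+d_1+a_1-f)(1+d_2+a_1-f)}{d_1d_2-h(1+d_1+d_2+a_1-f)}.$$ Then $$ {}_{8}F_{7}\left[\begin{matrix} f-1,\ \frac{f+1}{2},\ a_1,\ \frac f2+1,\ d_1,\ d_2,\ 2f-2-d_1-d_2-a_1+N,\ -N\\ \frac{f-1}{2},\ f-a_1,\ \frac f2-1,\ f-d_1,\ f-d_2,\ 2+a_1+d_1+d_2-f-N,\ f+N\end{matrix};1\right]$$ $$=\frac{(f)_N\,(f-d_1-d_2)_N\,(f-a_1-d_1-1)_N\,(f-a_1-d_2-1)_N}{(f-d_1)_N\,(f-d_2)_N\,(f-a_1)_N\,(f-a_1-d_1-d_2-1)_N}\cdot\frac{(k+1)_N}{(k)_N}.$$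
   Context: $(x)_n$ denotes the Pochhammer symbol: $(x)_0=1$, $(x)_n=x(x+1)\cdots(x+n-1)$ for $n\ge1$. The generalized hypergeometric function is $${}_{r+1}F_{r}\left[\begin{matrix} a_1,\dots,a_{r+1}\\ b_1,\dots,b_r\end{matrix};z\right]=\sum_{n=0}^{\infty}\frac{(a_1)_n\cdots(a_{r+1})_n}{(b_1)_n\cdots(b_r)_n\,n!}z^n ,$$ where no $b_i$ is a nonpositive integer; when one upper parameter equals $-N$ with $N$ a nonnegative integer the series terminates. *)

theory Defs
  imports "HOL-Analysis.Analysis"
begin

text \<open>Terminating generalized hypergeometric series at argument 1, truncated at index N
  (valid when one upper parameter equals -N: all later terms vanish).\<close>
definition hyp_term :: "complex list \<Rightarrow> complex list \<Rightarrow> complex \<Rightarrow> nat \<Rightarrow> complex" where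
  "hyp_term as bs z n =
     (\<Prod>a\<leftarrow>as. pochhammer a n) / ((\<Prod>b\<leftarrow>bs. pochhammer b n) * of_nat (fact n)) * z ^ n"

definition hypergeom_term :: "nat \<Rightarrow> complex list \<Rightarrow> complex list \<Rightarrow> complex \<Rightarrow> complex" where
  "hypergeom_term N as bs z = (\<Sum>n\<le>N. hyp_term as bs z n)"

definition nonpos_int :: "complex \<Rightarrow> bool" where
  "nonpos_int x \<longleftrightarrow> (\<exists>m::nat. x = - of_nat m)"

end

theory Submission
  imports Defs "HOL-Complex_Analysis.Conformal_Mappings"
begin


lemma nonint_nz: fixes x y :: complex shows "x \<notin> \<int> \<Longrightarrow> y - x \<in> \<int> \<Longrightarrow> y \<noteq> 0"
proof
  assume "x \<notin> \<int>" "y - x \<in> \<int>" "y = 0"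
  then have "-x \<in> \<int>" by simp
  then have "x \<in> \<int>" using Ints_minus[of "-x"] by simp
  then show False using \<open>x \<notin> \<int>\<close> by simp
qed
lemma nonint_shift: fixes x y :: complex shows "x \<notin> \<int> \<Longrightarrow> y - x \<in> \<int> \<Longrightarrow> y \<notin> \<int>"
proof
  assume "x \<notin> \<int>" "y - x \<in> \<int>" "y \<in> \<int>"
  then have "y - (y - x) \<in> \<int>" using Ints_diff by blast
  then show False using \<open>x \<notin> \<int>\<close> by simp
qed
lemma nonint_poch: fixes y :: complex shows "y \<notin> \<int> \<Longrightarrow> pochhammer y k \<noteq> 0"
  by (auto simp: pochhammer_eq_0_iff)

lemma poch_up: fixes z :: complex
  assumes "z \<noteq> 0" shows "pochhammer (z+1) k = (z + of_nat k) * pochhammer z k / z"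
proof -
  have "z * pochhammer (z+1) k = (z + of_nat k) * pochhammer z k"
    using pochhammer_rec[of z k] pochhammer_rec'[of z k] by simp
  then show ?thesis using assms by (simp add: field_simps)
qed
lemma poch_down: fixes z :: complex
  assumes "z + of_nat k \<noteq> 0" shows "pochhammer z k = z * pochhammer (z+1) k / (z + of_nat k)"
proof -
  have "z * pochhammer (z+1) k = (z + of_nat k) * pochhammer z k"
    using pochhammer_rec[of z k] pochhammer_rec'[of z k] by simp
  then show ?thesis using assms by (simp add: field_simps)
qed
lemma frac_cancel: fixes X Y Yi M :: complex shows "Y = Yi * M \<Longrightarrow> Yi \<noteq> 0 \<Longrightarrow> Y * (X / Yi) = M * X"
  by simp
lemma dist3: fixes Y p q r :: complex shows "Y*(p+q-r) = Y* p+Y* q-Y* r" by (simp add: algebra_simps)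
lemma wz_alg:
  fixes a b c d n k e :: complex
  assumes e: "e = 1+2* a-b-c-d+n"
  and nz: "a \<noteq> 0" "n+1 \<noteq> 0" "1+a-b+n \<noteq> 0" "1+a-c+n \<noteq> 0" "1+a-d+n \<noteq> 0" "1+a-b-c-d+n \<noteq> 0"
     "e+k \<noteq> 0" "a-e+k \<noteq> 0" "1+a+n \<noteq> 0"
  shows "(a+2* k)/a = ((1+a+n)*(1+a-b-c+n)*(1+a-b-d+n)*(1+a-c-d+n)/((1+a-b+n)*(1+a-c+n)*(1+a-d+n)*(1+a-b-c-d+n)))
            * ((a+2* k)/a*(e/(e+k))*((n+1-k)/(n+1))*((a-e)/(a-e+k))*((1+a+n+k)/(1+a+n)))
     + (-(1+e+n)/((n+1)* a*(1+a-b+n)*(1+a-c+n)*(1+a-d+n))) * ((a+k)*(b+k)*(c+k)*(d+k)*(k-n-1)/(a-e+k))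
     - (-(1+e+n)/((n+1)* a*(1+a-b+n)*(1+a-c+n)*(1+a-d+n))) * (k*(a-b+k)*(a-c+k)*(a-d+k)*(1+a+n+k)/(e+k))"
    (is "?T1 = ?T2 + ?T3 - ?T4")
proof -
  define D1 where "D1 = (1+a-b+n)*(1+a-c+n)*(1+a-d+n)"
  define D2 where "D2 = 1+a-b-c-d+n"
  define Y where "Y = a*(n+1)*(1+a+n)* D1* D2*(e+k)*(a-e+k)"
  have Y: "Y \<noteq> 0" unfolding Y_def D1_def D2_def using nz by simp
  have t2: "?T2 = ((1+a+n)*(1+a-b-c+n)*(1+a-b-d+n)*(1+a-c-d+n)*((a+2* k)* e*(n+1-k)*(a-e)*(1+a+n+k)))
       / (((1+a-b+n)*(1+a-c+n)*(1+a-d+n)*(1+a-b-c-d+n))*(a*(e+k)*(n+1)*(a-e+k)*(1+a+n)))"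
    by (simp only: times_divide_times_eq)
  have t3: "?T3 = (-(1+e+n)*((a+k)*(b+k)*(c+k)*(d+k)*(k-n-1)))/(((n+1)* a*(1+a-b+n)*(1+a-c+n)*(1+a-d+n))*(a-e+k))"
    by (simp only: times_divide_times_eq)
  have t4: "?T4 = (-(1+e+n)*(k*(a-b+k)*(a-c+k)*(a-d+k)*(1+a+n+k)))/(((n+1)* a*(1+a-b+n)*(1+a-c+n)*(1+a-d+n))*(e+k))"
    by (simp only: times_divide_times_eq)
  have y1: "Y*?T1 = ((n+1)*(1+a+n)* D1* D2*(e+k)*(a-e+k))*(a+2* k)"
    by (rule frac_cancel) (simp_all add: Y_def mult_ac nz)
  have y2: "Y*?T2 = 1*((1+a+n)*(1+a-b-c+n)*(1+a-b-d+n)*(1+a-c-d+n)*((a+2* k)* e*(n+1-k)*(a-e)*(1+a+n+k)))"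
    unfolding t2 by (rule frac_cancel) (simp_all add: Y_def D1_def D2_def mult_ac nz)
  have y3: "Y*?T3 = ((1+a+n)* D2*(e+k))*(-(1+e+n)*((a+k)*(b+k)*(c+k)*(d+k)*(k-n-1)))"
    unfolding t3 by (rule frac_cancel) (simp_all add: Y_def D1_def D2_def mult_ac nz)
  have y4: "Y*?T4 = ((1+a+n)* D2*(a-e+k))*(-(1+e+n)*(k*(a-b+k)*(a-c+k)*(a-d+k)*(1+a+n+k)))"
    unfolding t4 by (rule frac_cancel) (simp_all add: Y_def D1_def D2_def mult_ac nz)
  have P: "((n+1)*(1+a+n)* D1* D2*(e+k)*(a-e+k))*(a+2* k) = 
     1*((1+a+n)*(1+a-b-c+n)*(1+a-b-d+n)*(1+a-c-d+n)*((a+2* k)* e*(n+1-k)*(a-e)*(1+a+n+k)))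
     + ((1+a+n)* D2*(e+k))*(-(1+e+n)*((a+k)*(b+k)*(c+k)*(d+k)*(k-n-1)))
     - ((1+a+n)* D2*(a-e+k))*(-(1+e+n)*(k*(a-b+k)*(a-c+k)*(a-d+k)*(1+a+n+k)))"
    unfolding D1_def D2_def e by algebra
  have "Y*?T1 = Y*?T2 + Y*?T3 - Y*?T4"
    unfolding y1 y2 y3 y4 by (rule P)
  then have "Y*?T1 = Y*(?T2 + ?T3 - ?T4)" by (simp only: dist3[of Y])
  then show ?thesis by (simp only: mult_left_cancel[OF Y])
qed

definition jt :: "complex \<Rightarrow> complex \<Rightarrow> complex \<Rightarrow> complex \<Rightarrow> complex \<Rightarrow> nat \<Rightarrow> nat \<Rightarrow> complex" where
"jt a b c d e N k = (a + 2* of_nat k)/a * ((pochhammer a k * pochhammer b k * pochhammer c k * pochhammer d k * pochhammer e k * pochhammer (- of_nat N) k) / (pochhammer (1+a-b) k * pochhammer (1+a-c) k * pochhammer (1+a-d) k * pochhammer (1+a-e) k * pochhammer (1+a+ of_nat N) k * of_nat (fact k)))"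

definition jW :: "complex \<Rightarrow> complex \<Rightarrow> complex \<Rightarrow> complex \<Rightarrow> complex \<Rightarrow> nat \<Rightarrow> nat \<Rightarrow> complex" where
"jW a b c d e N k = (pochhammer a k * pochhammer b k * pochhammer c k * pochhammer d k * pochhammer (e+1) k * pochhammer (- of_nat N - 1) k) / (pochhammer (1+a-b) k * pochhammer (1+a-c) k * pochhammer (1+a-d) k * pochhammer (a-e) k * pochhammer (2+a+ of_nat N) k * of_nat (fact k))"

lemma alg_prev:
  fixes a e n k Pa Pb Pc Pd Pe1 PN1 Qb Qc Qd Qae Q2 F :: complex
  assumes nz: "e+k\<noteq>0" "a-e\<noteq>0" "1+a+n+k \<noteq>0" "1+a+n\<noteq>0" "a-e+k\<noteq>0" "a\<noteq>0" "n+1\<noteq>0"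
  shows "(a+2* k)/a * ((Pa* Pb* Pc* Pd*(e* Pe1/(e+k))*((-n-1+k)* PN1/(-n-1))) / (Qb* Qc* Qd*((a-e+k)* Qae/(a-e))*((1+a+n)* Q2/(1+a+n+k))* F))
     = (Pa* Pb* Pc* Pd* Pe1* PN1)/(Qb* Qc* Qd* Qae* Q2* F) * ((a+2* k)/a*(e/(e+k))*((n+1-k)/(n+1))*((a-e)/(a-e+k))*((1+a+n+k)/(1+a+n)))"
proof -
  have m: "-n-1 \<noteq> 0" using nz(7) by (simp add: add_eq_0_iff)
  have 1: "Pa* Pb* Pc* Pd*(e* Pe1/(e+k))*((-n-1+k)* PN1/(-n-1)) = (Pa* Pb* Pc* Pd* Pe1* PN1) * ((e/(e+k))*((-n-1+k)/(-n-1)))"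
    by (simp add: mult_ac)
  have 2: "Qb* Qc* Qd*((a-e+k)* Qae/(a-e))*((1+a+n)* Q2/(1+a+n+k))* F = (Qb* Qc* Qd* Qae* Q2* F) * (((a-e+k)/(a-e))*((1+a+n)/(1+a+n+k)))"
    by (simp add: mult_ac)
  have i1: "(-n-1+k)/(-n-1) = (n+1-k)/(n+1)"
  proof -
    have "-n-1+k = -(n+1-k)" "-n-1 = -(n+1)" by simp_all
    then show ?thesis by (simp only: minus_divide_divide)
  qed
  have i2: "\<And>X. X / (((a-e+k)/(a-e))*((1+a+n)/(1+a+n+k))) = X * ((a-e)/(a-e+k)) * ((1+a+n+k)/(1+a+n))"
    by (simp add: divide_inverse inverse_mult_distrib mult_ac)
  have 3: "(a+2* k)/a * (((e/(e+k))*((-n-1+k)/(-n-1))) / (((a-e+k)/(a-e))*((1+a+n)/(1+a+n+k)))) = ((a+2* k)/a*(e/(e+k))*((n+1-k)/(n+1))*((a-e)/(a-e+k))*((1+a+n+k)/(1+a+n)))"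
    unfolding i1 i2 by (simp only: mult_ac)
  show ?thesis unfolding 1 2 times_divide_times_eq[symmetric] 3[symmetric] by (simp only: mult_ac)
qed
lemma alg_Wsuc:
  fixes a b c d e n k Pa Pb Pc Pd Pe1 PN1 Qb Qc Qd Qae Q2 F :: complex
  shows "(Pa*(a+k)*(Pb*(b+k))*(Pc*(c+k))*(Pd*(d+k))*(Pe1*(e+1+k))*(PN1*(-n-1+k))) / (Qb*(1+a-b+k)*(Qc*(1+a-c+k))*(Qd*(1+a-d+k))*(Qae*(a-e+k))*(Q2*(2+a+n+k))*(F*(k+1)))
    = (Pa* Pb* Pc* Pd* Pe1* PN1)/(Qb* Qc* Qd* Qae* Q2* F) * ((a+k)*(b+k)*(c+k)*(d+k)*(e+1+k)*(k-n-1) / ((1+a-b+k)*(1+a-c+k)*(1+a-d+k)*(a-e+k)*(2+a+n+k)*(k+1)))"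
proof -
  have 1: "-n-1+k = k-n-1" by simp
  have 2: "Pa*(a+k)*(Pb*(b+k))*(Pc*(c+k))*(Pd*(d+k))*(Pe1*(e+1+k))*(PN1*(k-n-1)) = (Pa* Pb* Pc* Pd* Pe1* PN1)*((a+k)*(b+k)*(c+k)*(d+k)*(e+1+k)*(k-n-1))"
    by (simp only: mult_ac)
  have 3: "Qb*(1+a-b+k)*(Qc*(1+a-c+k))*(Qd*(1+a-d+k))*(Qae*(a-e+k))*(Q2*(2+a+n+k))*(F*(k+1)) = (Qb* Qc* Qd* Qae* Q2* F)*((1+a-b+k)*(1+a-c+k)*(1+a-d+k)*(a-e+k)*(2+a+n+k)*(k+1))"
    by (simp only: mult_ac)
  show ?thesis unfolding 1 2 3 by (rule times_divide_times_eq[symmetric])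
qed

lemma jt_W: "jt a b c d (e+1) (Suc N) k = (a + 2* of_nat k)/a * jW a b c d e N k"
proof -
  have 1: "1+a-(e+1) = a-e" "- of_nat (Suc N) = - (of_nat N::complex) - 1" "1+a+ of_nat (Suc N) = 2+a+(of_nat N::complex)"
    by simp_all
  show ?thesis unfolding jt_def jW_def 1 ..
qed

lemma jt_prev:
  fixes a b c d e :: complex
  assumes nz: "e + of_nat k \<noteq> 0" "a - e \<noteq> 0" "1 + a + of_nat N + of_nat k \<noteq> 0" "1 + a + of_nat N \<noteq> 0"
     "a - e + of_nat k \<noteq> 0" "a \<noteq> 0"
  shows "jt a b c d e N k = jW a b c d e N k * ((a+2* of_nat k)/a*(e/(e+ of_nat k))*((of_nat N+1- of_nat k)/(of_nat N+1))*((a-e)/(a-e+ of_nat k))*((1+a+ of_nat N+ of_nat k)/(1+a+ of_nat N)))"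
proof -
  have p1: "pochhammer e k = e * pochhammer (e+1) k / (e + of_nat k)" by (rule poch_down) (rule nz)
  have nN: "(of_nat N + 1::complex) \<noteq> 0" by (metis of_nat_Suc of_nat_eq_0_iff add.commute nat.simps(3))
  have nN': "(- of_nat N - 1::complex) \<noteq> 0" using nN by (simp add: add_eq_0_iff)
  have p2: "pochhammer (- of_nat N :: complex) k = (- of_nat N - 1 + of_nat k) * pochhammer (- of_nat N - 1) k / (- of_nat N - 1)"
  proof -
    have "pochhammer (- of_nat N - 1 + 1) k = (- of_nat N - 1 + of_nat k :: complex) * pochhammer (- of_nat N - 1) k / (- of_nat N - 1)"
      by (rule poch_up[OF nN'])
    moreover have "- of_nat N - 1 + 1 = - (of_nat N::complex)" by simp
    ultimately show ?thesis by simp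
  qed
  have p3: "pochhammer (1+a-e) k = (a - e + of_nat k) * pochhammer (a-e) k / (a-e)"
  proof -
    have "pochhammer (a-e+1) k = (a - e + of_nat k) * pochhammer (a-e) k / (a-e)"
      by (rule poch_up) (rule nz)
    moreover have "a-e+1 = 1+a-e" by simp
    ultimately show ?thesis by simp
  qed
  have p4: "pochhammer (1+a+ of_nat N) k = (1+a+ of_nat N) * pochhammer (2+a+ of_nat N) k / (1+a+ of_nat N+ of_nat k)"
  proof -
    have "pochhammer (1+a+ of_nat N) k = (1+a+ of_nat N) * pochhammer (1+a+ of_nat N+1) k / (1+a+ of_nat N+ of_nat k)"
      by (rule poch_down) (rule nz)
    moreover have "1+a+ of_nat N+1 = 2+a+(of_nat N::complex)" by simp
    ultimately show ?thesis by simp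
  qed
  show ?thesis unfolding jt_def jW_def p1 p2 p3 p4
    by (rule alg_prev) (use nz nN in auto)
qed

lemma jW_Suc:
  fixes a b c d e :: complex
  shows "jW a b c d e N (Suc k) = jW a b c d e N k * ((a+ of_nat k)*(b+ of_nat k)*(c+ of_nat k)*(d+ of_nat k)*(e+1+ of_nat k)*(of_nat k - of_nat N - 1) / ((1+a-b+ of_nat k)*(1+a-c+ of_nat k)*(1+a-d+ of_nat k)*(a-e+ of_nat k)*(2+a+ of_nat N+ of_nat k)*(of_nat k+1)))"
proof -
  have f: "(of_nat (fact (Suc k))::complex) = of_nat (fact k) * (of_nat k + 1)" by (simp add: algebra_simps)
  show ?thesis unfolding jW_def pochhammer_Suc f
    by (rule alg_Wsuc)
qed



lemma alg_g:
  fixes a b c d e n k C W :: complex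
  assumes nz: "1+a-b+k \<noteq> 0" "1+a-c+k \<noteq> 0" "1+a-d+k \<noteq> 0" "2+a+n+k \<noteq> 0" "k+1 \<noteq> 0" "e+1+k \<noteq> 0" "a-e+k \<noteq> 0"
  shows "C * (W * ((a+k)*(b+k)*(c+k)*(d+k)*(e+1+k)*(k-n-1) / ((1+a-b+k)*(1+a-c+k)*(1+a-d+k)*(a-e+k)*(2+a+n+k)*(k+1)))) * ((k+1)*(1+a-b+k)*(1+a-c+k)*(1+a-d+k)*(2+a+n+k)/(e+1+k))
   = C*(W*((a+k)*(b+k)*(c+k)*(d+k)*(k-n-1)/(a-e+k)))"
proof -
  have gen: "\<And>A M E D B. B \<noteq> 0 \<Longrightarrow> E \<noteq> 0 \<Longrightarrow> C * (W * ((A* M)* E / (D* B))) * (B/E) = C*(W*(A* M/D))"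
    by (simp add: field_simps)
  have B: "(k+1)*(1+a-b+k)*(1+a-c+k)*(1+a-d+k)*(2+a+n+k) \<noteq> 0" using nz by simp
  have 1: "(a+k)*(b+k)*(c+k)*(d+k)*(e+1+k)*(k-n-1) = ((a+k)*(b+k)*(c+k)*(d+k)*(k-n-1))*(e+1+k)" by (simp only: mult_ac)
  have 2: "(1+a-b+k)*(1+a-c+k)*(1+a-d+k)*(a-e+k)*(2+a+n+k)*(k+1) = (a-e+k)*((k+1)*(1+a-b+k)*(1+a-c+k)*(1+a-d+k)*(2+a+n+k))" by (simp only: mult_ac)
  show ?thesis unfolding 1 2 by (rule gen[OF B nz(6)])
qed
lemma comb: fixes t1 r x2 c x3 x4 w :: complex
  assumes h: "t1 = r* x2 + c* x3 - c* x4" shows "t1* w = r*(w* x2) + c*(w* x3) - c* w* x4"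
  unfolding h by (simp add: algebra_simps)

definition jC :: "complex \<Rightarrow> complex \<Rightarrow> complex \<Rightarrow> complex \<Rightarrow> complex \<Rightarrow> nat \<Rightarrow> complex" where
 "jC a b c d e N = -(1+e+ of_nat N)/((of_nat N+1)* a*(1+a-b+ of_nat N)*(1+a-c+ of_nat N)*(1+a-d+ of_nat N))"
definition jrho :: "complex \<Rightarrow> complex \<Rightarrow> complex \<Rightarrow> complex \<Rightarrow> nat \<Rightarrow> complex" where
 "jrho a b c d N = (1+a+ of_nat N)*(1+a-b-c+ of_nat N)*(1+a-b-d+ of_nat N)*(1+a-c-d+ of_nat N)/((1+a-b+ of_nat N)*(1+a-c+ of_nat N)*(1+a-d+ of_nat N)*(1+a-b-c-d+ of_nat N))"
definition jg :: "complex \<Rightarrow> complex \<Rightarrow> complex \<Rightarrow> complex \<Rightarrow> complex \<Rightarrow> nat \<Rightarrow> nat \<Rightarrow> complex" where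
 "jg a b c d e N k = jC a b c d e N * jW a b c d e N k * (of_nat k*(a-b+ of_nat k)*(a-c+ of_nat k)*(a-d+ of_nat k)*(1+a+ of_nat N+ of_nat k)/(e+ of_nat k))"
definition jr :: "complex \<Rightarrow> complex \<Rightarrow> complex \<Rightarrow> complex \<Rightarrow> nat \<Rightarrow> complex" where
 "jr a b c d N = pochhammer (1+a) N * pochhammer (1+a-b-c) N * pochhammer (1+a-b-d) N * pochhammer (1+a-c-d) N / (pochhammer (1+a-b) N * pochhammer (1+a-c) N * pochhammer (1+a-d) N * pochhammer (1+a-b-c-d) N)"

lemma jg_Suc:
  fixes a b c d e :: complex
  assumes nz: "1+a-b+ of_nat k \<noteq> 0" "1+a-c+ of_nat k \<noteq> 0" "1+a-d+ of_nat k \<noteq> 0" "2+a+ of_nat N+ of_nat k \<noteq> 0" "e+1+ of_nat k \<noteq> 0" "a-e+ of_nat k \<noteq> 0"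
  shows "jg a b c d e N (Suc k) = jC a b c d e N * (jW a b c d e N k * ((a+ of_nat k)*(b+ of_nat k)*(c+ of_nat k)*(d+ of_nat k)*(of_nat k- of_nat N-1)/(a-e+ of_nat k)))"
proof -
  have s: "(of_nat (Suc k)::complex) = of_nat k + 1" by simp
  have q: "a-b+(of_nat k+1) = 1+a-b+(of_nat k::complex)" "a-c+(of_nat k+1) = 1+a-c+(of_nat k::complex)" "a-d+(of_nat k+1) = 1+a-d+(of_nat k::complex)"
    "1+a+ of_nat N+(of_nat k+1) = 2+a+ of_nat N+(of_nat k::complex)" "e+(of_nat k+1) = e+1+(of_nat k::complex)" by simp_all
  have k1: "(of_nat k + 1::complex) \<noteq> 0" by (metis of_nat_Suc of_nat_eq_0_iff add.commute nat.simps(3))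
  show ?thesis unfolding jg_def jW_Suc s q
    by (rule alg_g) (use nz k1 in auto)
qed

lemma jg_0: "jg a b c d e N 0 = 0" unfolding jg_def by simp

lemma wz_step:
  fixes a b c d e :: complex
  assumes e: "e = 1+2* a-b-c-d+ of_nat N"
  and nz: "a \<noteq> 0" "1+a-b+ of_nat N \<noteq> 0" "1+a-c+ of_nat N \<noteq> 0" "1+a-d+ of_nat N \<noteq> 0" "1+a-b-c-d+ of_nat N \<noteq> 0"
     "e+ of_nat k \<noteq> 0" "a-e+ of_nat k \<noteq> 0" "1+a+ of_nat N \<noteq> 0" "a - e \<noteq> 0" "1 + a + of_nat N + of_nat k \<noteq> 0"
     "1+a-b+ of_nat k \<noteq> 0" "1+a-c+ of_nat k \<noteq> 0" "1+a-d+ of_nat k \<noteq> 0" "2+a+ of_nat N+ of_nat k \<noteq> 0" "e+1+ of_nat k \<noteq> 0"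
  shows "jt a b c d (e+1) (Suc N) k = jrho a b c d N * jt a b c d e N k + jg a b c d e N (Suc k) - jg a b c d e N k"
proof -
  have nN: "(of_nat N + 1::complex) \<noteq> 0" by (metis of_nat_Suc of_nat_eq_0_iff add.commute nat.simps(3))
  have W: "(a + 2* of_nat k)/a = jrho a b c d N * ((a+2* of_nat k)/a*(e/(e+ of_nat k))*((of_nat N+1- of_nat k)/(of_nat N+1))*((a-e)/(a-e+ of_nat k))*((1+a+ of_nat N+ of_nat k)/(1+a+ of_nat N)))
     + jC a b c d e N * ((a+ of_nat k)*(b+ of_nat k)*(c+ of_nat k)*(d+ of_nat k)*(of_nat k- of_nat N-1)/(a-e+ of_nat k))
     - jC a b c d e N * (of_nat k*(a-b+ of_nat k)*(a-c+ of_nat k)*(a-d+ of_nat k)*(1+a+ of_nat N+ of_nat k)/(e+ of_nat k))"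
    unfolding jrho_def jC_def by (rule wz_alg) (use e nz nN in auto)
  show ?thesis
    unfolding jt_W jt_prev[OF nz(6) nz(9) nz(10) nz(8) nz(7) nz(1)] jg_Suc[OF nz(11-14) nz(15) nz(7)]
    unfolding jg_def
    by (rule comb[OF W])
qed



lemma alg_jr: fixes P1 P2 P3 P4 Q1 Q2 Q3 Q4 x1 x2 x3 x4 y1 y2 y3 y4 :: complex
  shows "(P1* x1)*(P2* x2)*(P3* x3)*(P4* x4)/((Q1* y1)*(Q2* y2)*(Q3* y3)*(Q4* y4)) = (x1* x2* x3* x4)/(y1* y2* y3* y4) * (P1* P2* P3* P4/(Q1* Q2* Q3* Q4))"
proof -
  have 1: "(P1* x1)*(P2* x2)*(P3* x3)*(P4* x4) = (x1* x2* x3* x4)*(P1* P2* P3* P4)" by (simp only: mult_ac)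
  have 2: "(Q1* y1)*(Q2* y2)*(Q3* y3)*(Q4* y4) = (y1* y2* y3* y4)*(Q1* Q2* Q3* Q4)" by (simp only: mult_ac)
  show ?thesis unfolding 1 2 by (rule times_divide_times_eq[symmetric])
qed

lemma jr_Suc: "jr a b c d (Suc N) = jrho a b c d N * jr a b c d N"
  unfolding jr_def jrho_def pochhammer_Suc by (rule alg_jr)

lemma jt_last: "jt a b c d e N (Suc N) = 0"
  unfolding jt_def by (simp add: pochhammer_of_nat_eq_0_lemma)

lemma jg_last: "jg a b c d e N (Suc (Suc N)) = 0"
proof -
  have "- of_nat N - 1 = - (of_nat (Suc N) :: complex)" by simp
  then have "pochhammer (- of_nat N - 1 :: complex) (Suc (Suc N)) = 0"
    by (simp only: pochhammer_of_nat_eq_0_lemma lessI)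
  then show ?thesis unfolding jg_def jW_def by simp
qed

lemma neg_nonint: fixes x :: complex shows "x \<notin> \<int> \<Longrightarrow> -x \<notin> \<int>"
  using Ints_minus by force

theorem jackson:
  fixes a b c d :: complex
  assumes ha: "a \<notin> \<int>" and hb: "a-b \<notin> \<int>" and hc: "a-c \<notin> \<int>" and hd: "a-d \<notin> \<int>"
    and hbcd: "a-b-c-d \<notin> \<int>" and he: "2* a-b-c-d \<notin> \<int>"
  shows "(\<Sum>k\<le>N. jt a b c d (1+2* a-b-c-d+ of_nat N) N k) = jr a b c d N"
proof (induction N)
  case 0
  have "a \<noteq> 0" by (rule nonint_nz[OF ha]) simp
  then show ?case by (simp add: jt_def jr_def)
next
  case (Suc N)
  define e where "e = 1+2* a-b-c-d+ of_nat N"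
  have e1: "1+2* a-b-c-d+ of_nat (Suc N) = e+1" unfolding e_def by simp
  have hbcd': "-(a-b-c-d) \<notin> \<int>" by (rule neg_nonint[OF hbcd])
  have step: "jt a b c d (e+1) (Suc N) k = jrho a b c d N * jt a b c d e N k + jg a b c d e N (Suc k) - jg a b c d e N k" for k
  proof (rule wz_step[OF e_def])
    show "a \<noteq> 0" by (rule nonint_nz[OF ha]) simp
    show "1+a-b+ of_nat N \<noteq> 0" by (rule nonint_nz[OF hb]) simp
    show "1+a-c+ of_nat N \<noteq> 0" by (rule nonint_nz[OF hc]) simp
    show "1+a-d+ of_nat N \<noteq> 0" by (rule nonint_nz[OF hd]) simp
    show "1+a-b-c-d+ of_nat N \<noteq> 0" by (rule nonint_nz[OF hbcd]) simp
    show "e+ of_nat k \<noteq> 0" by (rule nonint_nz[OF he]) (simp add: e_def)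
    show "a-e+ of_nat k \<noteq> 0" by (rule nonint_nz[OF hbcd']) (simp add: e_def)
    show "1+a+ of_nat N \<noteq> 0" by (rule nonint_nz[OF ha]) simp
    show "a - e \<noteq> 0" by (rule nonint_nz[OF hbcd']) (simp add: e_def)
    show "1 + a + of_nat N + of_nat k \<noteq> 0" by (rule nonint_nz[OF ha]) simp
    show "1+a-b+ of_nat k \<noteq> 0" by (rule nonint_nz[OF hb]) simp
    show "1+a-c+ of_nat k \<noteq> 0" by (rule nonint_nz[OF hc]) simp
    show "1+a-d+ of_nat k \<noteq> 0" by (rule nonint_nz[OF hd]) simp
    show "2+a+ of_nat N+ of_nat k \<noteq> 0" by (rule nonint_nz[OF ha]) simp
    show "e+1+ of_nat k \<noteq> 0" by (rule nonint_nz[OF he]) (simp add: e_def)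
  qed
  have "(\<Sum>k\<le>Suc N. jt a b c d (1+2* a-b-c-d+ of_nat (Suc N)) (Suc N) k)
      = (\<Sum>k<Suc (Suc N). jrho a b c d N * jt a b c d e N k + (jg a b c d e N (Suc k) - jg a b c d e N k))"
    unfolding e1 lessThan_Suc_atMost by (rule sum.cong) (simp_all add: step)
  also have "\<dots> = jrho a b c d N * (\<Sum>k<Suc (Suc N). jt a b c d e N k) + (jg a b c d e N (Suc (Suc N)) - jg a b c d e N 0)"
    by (simp only: sum.distrib sum_distrib_left sum_lessThan_telescope)
  also have "(\<Sum>k<Suc (Suc N). jt a b c d e N k) = (\<Sum>k\<le>N. jt a b c d e N k)"
    by (simp add: jt_last lessThan_Suc_atMost)
  also have "(\<Sum>k\<le>N. jt a b c d e N k) = jr a b c d N" using Suc.IH unfolding e_def .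
  finally show ?case by (simp add: jg_last jg_0 jr_Suc)
qed



definition hT0 :: "complex \<Rightarrow> complex \<Rightarrow> complex \<Rightarrow> complex \<Rightarrow> complex \<Rightarrow> nat \<Rightarrow> nat \<Rightarrow> complex" where
"hT0 f a1 d1 d2 E N m = (f - 1 + 2* of_nat m)/(f-1) * ((pochhammer (f-1) m * pochhammer a1 m * pochhammer d1 m * pochhammer d2 m * pochhammer E m * pochhammer (- of_nat N) m) / (pochhammer (f-a1) m * pochhammer (f-d1) m * pochhammer (f-d2) m * pochhammer (f-E) m * pochhammer (f+ of_nat N) m * of_nat (fact m)))"

lemma ratio_split: fixes P Q s1 s2 :: complex shows "(P* s1)/(Q* s2) = P/Q*(s1/s2)"
  by (rule times_divide_times_eq[symmetric])

lemma G1: fixes S P1 Pb P3 P4 P5 P6 Qb Q2 Q3 Q4 Q5 F x y m :: complex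
  shows "S * ((P1*((x+m)* Pb/x)* P3* P4* P5* P6)/((y* Qb/(y+m))* Q2* Q3* Q4* Q5* F)) = S*((P1* Pb* P3* P4* P5* P6)/(Qb* Q2* Q3* Q4* Q5* F)) * ((x+m)/x*((y+m)/y))"
proof -
  have 1: "P1*((x+m)* Pb/x)* P3* P4* P5* P6 = (P1* Pb* P3* P4* P5* P6)*((x+m)/x)" by (simp add: mult_ac)
  have 2: "(y* Qb/(y+m))* Q2* Q3* Q4* Q5* F = (Qb* Q2* Q3* Q4* Q5* F)*(y/(y+m))" by (simp add: mult_ac)
  have 3: "((x+m)/x) / (y/(y+m)) = (x+m)/x*((y+m)/y)" by simp
  show ?thesis unfolding 1 2 ratio_split 3 by (simp only: mult_ac)
qed

lemma G2: fixes S P1 P2 P3 P4 Pe P6 Q1 Q2 Q3 Qe Q5 F x y m :: complex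
  shows "S * ((P1* P2* P3* P4*((x+m)* Pe/x)* P6)/(Q1* Q2* Q3*(y* Qe/(y+m))* Q5* F)) = S*((P1* P2* P3* P4* Pe* P6)/(Q1* Q2* Q3* Qe* Q5* F)) * ((x+m)/x*((y+m)/y))"
proof -
  have 1: "P1* P2* P3* P4*((x+m)* Pe/x)* P6 = (P1* P2* P3* P4* Pe* P6)*((x+m)/x)" by (simp add: mult_ac)
  have 2: "Q1* Q2* Q3*(y* Qe/(y+m))* Q5* F = (Q1* Q2* Q3* Qe* Q5* F)*(y/(y+m))" by (simp add: mult_ac)
  have 3: "((x+m)/x) / (y/(y+m)) = (x+m)/x*((y+m)/y)" by simp
  show ?thesis unfolding 1 2 ratio_split 3 by (simp only: mult_ac)
qed

lemma J1_T0:
  fixes f a1 d1 d2 E :: complex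
  assumes nz: "a1 \<noteq> 0" "f-1-a1 + of_nat m \<noteq> 0"
  shows "jt (f-1) (a1+1) d1 d2 E N m = hT0 f a1 d1 d2 E N m * ((a1+ of_nat m)/a1*((f-1-a1+ of_nat m)/(f-1-a1)))"
proof -
  have r: "1+(f-1)-(a1+1) = f-1-a1" "1+(f-1)-d1 = f-d1" "1+(f-1)-d2 = f-d2" "1+(f-1)-E = f-E" "1+(f-1)+ of_nat N = f+ of_nat N" by simp_all
  have p1: "pochhammer (a1+1) m = (a1 + of_nat m) * pochhammer a1 m / a1" by (rule poch_up[OF nz(1)])
  have p2: "pochhammer (f-1-a1) m = (f-1-a1) * pochhammer (f-a1) m / (f-1-a1 + of_nat m)"
  proof -
    have "pochhammer (f-1-a1) m = (f-1-a1) * pochhammer (f-1-a1+1) m / (f-1-a1 + of_nat m)" by (rule poch_down[OF nz(2)])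
    moreover have "f-1-a1+1 = f-a1" by simp
    ultimately show ?thesis by simp
  qed
  show ?thesis unfolding jt_def hT0_def r p1 p2 by (rule G1)
qed

lemma J2_T0:
  fixes f a1 d1 d2 E :: complex
  assumes nz: "E \<noteq> 0" "f-1-E + of_nat m \<noteq> 0"
  shows "jt (f-1) a1 d1 d2 (E+1) N m = hT0 f a1 d1 d2 E N m * ((E+ of_nat m)/E*((f-1-E+ of_nat m)/(f-1-E)))"
proof -
  have r: "1+(f-1)-a1 = f-a1" "1+(f-1)-d1 = f-d1" "1+(f-1)-d2 = f-d2" "1+(f-1)-(E+1) = f-1-E" "1+(f-1)+ of_nat N = f+ of_nat N" by simp_all
  have p1: "pochhammer (E+1) m = (E + of_nat m) * pochhammer E m / E" by (rule poch_up[OF nz(1)])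
  have p2: "pochhammer (f-1-E) m = (f-1-E) * pochhammer (f-E) m / (f-1-E + of_nat m)"
  proof -
    have "pochhammer (f-1-E) m = (f-1-E) * pochhammer (f-1-E+1) m / (f-1-E + of_nat m)" by (rule poch_down[OF nz(2)])
    moreover have "f-1-E+1 = f-E" by simp
    ultimately show ?thesis by simp
  qed
  show ?thesis unfolding jt_def hT0_def r p1 p2 by (rule G2)
qed




lemma cancelR: fixes P Q R s :: complex assumes "R \<noteq> 0" shows "(P*(R* s))/(Q* R) = P/Q* s"
proof -
  have "(P*(R* s))/(Q* R) = ((P* s)* R)/(Q* R)" by (simp only: mult_ac)
  also have "\<dots> = (P* s)/Q" using assms by (rule mult_divide_mult_cancel_right)
  finally show ?thesis by simp
qed

lemma G3: fixes P1 Pa Pd1 Pd2 PE hPN Rh Qa Rg Qd1 Qd2 QE Qf F h u v w m :: complex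
  assumes R: "Rh \<noteq> 0" "Rg \<noteq> 0" and hw: "(h+m)/h = (w+2* m)/w"
  shows "(P1*((h+m)* Rh/h)* Pa*((u+m)*((v+m)* Rg/v)/u)* Pd1* Pd2* PE* hPN)/(Rh* Qa* Rg* Qd1* Qd2* QE* Qf* F)
     = (w+2* m)/w * ((P1* Pa* Pd1* Pd2* PE* hPN)/(Qa* Qd1* Qd2* QE* Qf* F)) * (((u+m)*(v+m))/(u* v))"
proof -
  have 1: "P1*((h+m)* Rh/h)* Pa*((u+m)*((v+m)* Rg/v)/u)* Pd1* Pd2* PE* hPN = (P1* Pa* Pd1* Pd2* PE* hPN)*((Rh* Rg)*(((h+m)/h)*(((u+m)*(v+m))/(u* v))))"
    by (simp add: mult_ac)
  have 2: "Rh* Qa* Rg* Qd1* Qd2* QE* Qf* F = (Qa* Qd1* Qd2* QE* Qf* F)*(Rh* Rg)" by (simp only: mult_ac)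
  have R2: "Rh* Rg \<noteq> 0" using R by simp
  show ?thesis unfolding 1 2 cancelR[OF R2] hw by (simp only: mult_ac)
qed

lemma t8_T0:
  fixes f a1 d1 d2 :: complex
  assumes nz: "pochhammer ((f-1)/2) m \<noteq> 0" "pochhammer (f/2-1) m \<noteq> 0" "(f-1)/2 \<noteq> 0" "f/2 \<noteq> 0" "f/2-1 \<noteq> 0" "f-1 \<noteq> 0"
  shows "hyp_term [f-1, (f+1)/2, a1, f/2+1, d1, d2, 2* f-2-d1-d2-a1+ of_nat N, - of_nat N]
           [(f-1)/2, f-a1, f/2-1, f-d1, f-d2, 2+a1+d1+d2-f- of_nat N, f+ of_nat N] 1 m
     = hT0 f a1 d1 d2 (2* f-2-d1-d2-a1+ of_nat N) N m * (((f/2+ of_nat m)*(f/2-1+ of_nat m))/((f/2)*(f/2-1)))"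
proof -
  define E where "E = 2* f-2-d1-d2-a1+ (of_nat N::complex)"
  have ht: "hyp_term [f-1, (f+1)/2, a1, f/2+1, d1, d2, E, - of_nat N]
           [(f-1)/2, f-a1, f/2-1, f-d1, f-d2, 2+a1+d1+d2-f- of_nat N, f+ of_nat N] 1 m
     = (pochhammer (f-1) m * pochhammer ((f+1)/2) m * pochhammer a1 m * pochhammer (f/2+1) m * pochhammer d1 m * pochhammer d2 m * pochhammer E m * pochhammer (- of_nat N) m)
     / (pochhammer ((f-1)/2) m * pochhammer (f-a1) m * pochhammer (f/2-1) m * pochhammer (f-d1) m * pochhammer (f-d2) m * pochhammer (2+a1+d1+d2-f- of_nat N) m * pochhammer (f+ of_nat N) m * of_nat (fact m))"
    unfolding hyp_term_def by (simp add: mult_ac)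
  have r1: "2+a1+d1+d2-f- of_nat N = f - E" unfolding E_def by simp
  have p1: "pochhammer ((f+1)/2) m = ((f-1)/2 + of_nat m) * pochhammer ((f-1)/2) m / ((f-1)/2)"
  proof -
    have "pochhammer ((f-1)/2+1) m = ((f-1)/2 + of_nat m) * pochhammer ((f-1)/2) m / ((f-1)/2)" by (rule poch_up[OF nz(3)])
    moreover have "(f-1)/2+1 = (f+1)/2" by (simp add: field_simps)
    ultimately show ?thesis by simp
  qed
  have p2: "pochhammer (f/2+1) m = (f/2 + of_nat m)*((f/2-1+ of_nat m)* pochhammer (f/2-1) m/(f/2-1))/(f/2)"
  proof -
    have a: "pochhammer (f/2+1) m = (f/2 + of_nat m)* pochhammer (f/2) m/(f/2)" by (rule poch_up[OF nz(4)])
    have "pochhammer (f/2-1+1) m = (f/2-1+ of_nat m)* pochhammer (f/2-1) m/(f/2-1)" by (rule poch_up[OF nz(5)])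
    moreover have "f/2-1+1 = f/2" by simp
    ultimately have b: "pochhammer (f/2) m = (f/2-1+ of_nat m)* pochhammer (f/2-1) m/(f/2-1)" by simp
    show ?thesis unfolding a b ..
  qed
  have hw: "((f-1)/2 + of_nat m)/((f-1)/2) = (f-1+2* of_nat m)/(f-1)"
    using nz(6) by (simp add: field_simps)
  show ?thesis unfolding E_def[symmetric] ht unfolding r1 p1 p2 hT0_def
    by (rule G3[OF nz(1) nz(2) hw])
qed




lemma poly4: fixes f g a1 E m :: complex
  assumes "f = 2* g"
  shows "(g*(g-1) - E*(f-1-E))*((a1+m)*(f-1-a1+m)) + (a1*(f-1-a1) - g*(g-1))*((E+m)*(f-1-E+m)) = (a1*(f-1-a1) - E*(f-1-E))*((g+m)*(g-1+m))"
  using assms by algebra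

lemma canc2: fixes a x m :: complex assumes "a \<noteq> 0" "x \<noteq> 0" shows "(a* x)*((a+m)/a*((x+m)/x)) = (a+m)*(x+m)"
  using assms by (simp add: field_simps)

lemma scal8:
  fixes f a1 E m :: complex
  assumes nz: "f/2 \<noteq> 0" "f/2-1 \<noteq> 0" "a1 \<noteq> 0" "f-1-a1 \<noteq> 0" "E \<noteq> 0" "f-1-E \<noteq> 0"
    "a1*(f-1-a1) - E*(f-1-E) \<noteq> 0"
  shows "((f/2+m)*(f/2-1+m))/((f/2)*(f/2-1)) =
    ((f/2*(f/2-1) - E*(f-1-E))*((a1*(f-1-a1))*((a1+m)/a1*((f-1-a1+m)/(f-1-a1)))) + (a1*(f-1-a1) - f/2*(f/2-1))*((E*(f-1-E))*((E+m)/E*((f-1-E+m)/(f-1-E)))))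
     / ((f/2*(f/2-1))*(a1*(f-1-a1) - E*(f-1-E)))"
proof -
  have e1: "(a1*(f-1-a1))*((a1+m)/a1*((f-1-a1+m)/(f-1-a1))) = (a1+m)*(f-1-a1+m)" by (rule canc2) (use nz in auto)
  have e2: "(E*(f-1-E))*((E+m)/E*((f-1-E+m)/(f-1-E))) = (E+m)*(f-1-E+m)" by (rule canc2) (use nz in auto)
  have p: "(f/2*(f/2-1) - E*(f-1-E))*((a1+m)*(f-1-a1+m)) + (a1*(f-1-a1) - f/2*(f/2-1))*((E+m)*(f-1-E+m)) = (a1*(f-1-a1) - E*(f-1-E))*((f/2+m)*(f/2-1+m))"
    by (rule poly4) simp
  show ?thesis unfolding e1 e2 p
    by (rule mult_divide_mult_cancel_right[OF nz(7), symmetric, THEN trans]) (simp only: mult.commute)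
qed



lemmas intsimps = Ints_add Ints_diff Ints_minus Ints_mult Ints_of_nat Ints_1 Ints_0

definition gen8 :: "complex \<Rightarrow> complex \<Rightarrow> complex \<Rightarrow> complex \<Rightarrow> bool" where
 "gen8 f a1 d1 d2 \<longleftrightarrow> f \<notin> \<int> \<and> a1 \<notin> \<int> \<and> f-a1 \<notin> \<int> \<and> f-d1 \<notin> \<int> \<and> f-d2 \<notin> \<int> \<and> 2* f-a1-d1-d2 \<notin> \<int>
    \<and> f-a1-d1-d2 \<notin> \<int> \<and> 2* f-2* a1-d1-d2 \<notin> \<int> \<and> f-d1-d2 \<notin> \<int> \<and> f-a1-d1 \<notin> \<int> \<and> f-a1-d2 \<notin> \<int>"

lemma half1: fixes f :: complex shows "f \<notin> \<int> \<Longrightarrow> (f-1)/2 \<notin> \<int>"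
proof
  assume "f \<notin> \<int>" "(f-1)/2 \<in> \<int>"
  then have "2*((f-1)/2)+1 \<in> \<int>" by (intro Ints_add Ints_mult Ints_1) auto
  moreover have "2*((f-1)/2)+1 = f" by (simp add: field_simps)
  ultimately show False using \<open>f \<notin> \<int>\<close> by metis
qed
lemma half2: fixes f :: complex shows "f \<notin> \<int> \<Longrightarrow> f/2-1 \<notin> \<int>"
proof
  assume "f \<notin> \<int>" "f/2-1 \<in> \<int>"
  then have "2*(f/2-1)+2 \<in> \<int>" by (intro Ints_add Ints_mult) auto
  moreover have "2*(f/2-1)+2 = f" by simp
  ultimately show False using \<open>f \<notin> \<int>\<close> by metis
qed

lemma s12: fixes f a1 E :: complex shows "a1*(f-1-a1) - E*(f-1-E) = (a1-E)*(f-1-a1-E)"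
  by (simp add: algebra_simps)

lemma comb8: fixes T Q c1 c2 s1 s2 r1 r2 D :: complex
  assumes "Q = (c1*(s1* r1) + c2*(s2* r2))/D"
  shows "T* Q = (c1*(s1*(T* r1)) + c2*(s2*(T* r2)))/D"
  unfolding assms by (simp add: algebra_simps)

lemma t8_decomp:
  fixes f a1 d1 d2 :: complex and N m :: nat
  assumes g: "gen8 f a1 d1 d2"
  defines "E \<equiv> 2* f-2-d1-d2-a1+ of_nat N"
  shows "hyp_term [f-1, (f+1)/2, a1, f/2+1, d1, d2, 2* f-2-d1-d2-a1+ of_nat N, - of_nat N]
           [(f-1)/2, f-a1, f/2-1, f-d1, f-d2, 2+a1+d1+d2-f- of_nat N, f+ of_nat N] 1 m
     = ((f/2*(f/2-1) - E*(f-1-E))*((a1*(f-1-a1))* jt (f-1) (a1+1) d1 d2 E N m) + (a1*(f-1-a1) - f/2*(f/2-1))*((E*(f-1-E))* jt (f-1) a1 d1 d2 (E+1) N m))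
     / ((f/2*(f/2-1))*(a1*(f-1-a1) - E*(f-1-E)))"
proof -
  from g have hf: "f \<notin> \<int>" and ha: "a1 \<notin> \<int>" and hfa: "f-a1 \<notin> \<int>" and h2: "2* f-a1-d1-d2 \<notin> \<int>"
    and hfadd: "f-a1-d1-d2 \<notin> \<int>" and h22: "2* f-2* a1-d1-d2 \<notin> \<int>" and hfdd: "f-d1-d2 \<notin> \<int>"
    unfolding gen8_def by auto
  have h1: "(f-1)/2 \<notin> \<int>" by (rule half1[OF hf])
  have h2': "f/2-1 \<notin> \<int>" by (rule half2[OF hf])
  have nz1: "(f-1)/2 \<noteq> 0" by (rule nonint_nz[OF h1]) simp
  have nz2: "f/2-1 \<noteq> 0" by (rule nonint_nz[OF h2']) simp
  have nz3: "f/2 \<noteq> 0" by (rule nonint_nz[OF h2']) simp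
  have nz4: "f-1 \<noteq> 0" by (rule nonint_nz[OF hf]) simp
  have nz5: "a1 \<noteq> 0" by (rule nonint_nz[OF ha]) simp
  have nz6: "f-1-a1+ of_nat m \<noteq> 0" by (rule nonint_nz[OF hfa]) (simp add: algebra_simps intsimps)
  have nz7: "f-1-a1 \<noteq> 0" by (rule nonint_nz[OF hfa]) (simp add: algebra_simps intsimps)
  have nz8: "E \<noteq> 0" unfolding E_def by (rule nonint_nz[OF h2]) (simp add: algebra_simps intsimps)
  have hfadd': "-(f-a1-d1-d2) \<notin> \<int>" by (rule neg_nonint[OF hfadd])
  have nz9: "f-1-E+ of_nat m \<noteq> 0" unfolding E_def by (rule nonint_nz[OF hfadd']) (simp add: algebra_simps intsimps)
  have nz10: "f-1-E \<noteq> 0" unfolding E_def by (rule nonint_nz[OF hfadd']) (simp add: algebra_simps intsimps)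
  have h22': "-(2* f-2* a1-d1-d2) \<notin> \<int>" by (rule neg_nonint[OF h22])
  have hfdd': "-(f-d1-d2) \<notin> \<int>" by (rule neg_nonint[OF hfdd])
  have nz11: "a1 - E \<noteq> 0" unfolding E_def by (rule nonint_nz[OF h22']) (simp add: algebra_simps intsimps)
  have nz12: "f-1-a1-E \<noteq> 0" unfolding E_def by (rule nonint_nz[OF hfdd']) (simp add: algebra_simps intsimps)
  have nz13: "a1*(f-1-a1) - E*(f-1-E) \<noteq> 0" unfolding s12 using nz11 nz12 by simp
  have p1: "pochhammer ((f-1)/2) m \<noteq> 0" by (rule nonint_poch[OF h1])
  have p2: "pochhammer (f/2-1) m \<noteq> 0" by (rule nonint_poch[OF h2'])
  show ?thesis
    unfolding E_def t8_T0[OF p1 p2 nz1 nz3 nz2 nz4] unfolding E_def[symmetric] J1_T0[OF nz5 nz6] J2_T0[OF nz8 nz9]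
    by (rule comb8) (rule scal8[OF nz3 nz2 nz5 nz7 nz8 nz10 nz13])
qed



lemma sum_comb: fixes c1 c2 s1 s2 D :: complex and x y :: "nat \<Rightarrow> complex"
  shows "(\<Sum>m\<le>N. (c1*(s1* x m) + c2*(s2* y m))/D) = (c1*(s1*(\<Sum>m\<le>N. x m)) + c2*(s2*(\<Sum>m\<le>N. y m)))/D"
  by (simp add: sum_divide_distrib[symmetric] sum.distrib sum_distrib_left)

lemma sum8:
  fixes f a1 d1 d2 :: complex and N :: nat
  assumes g: "gen8 f a1 d1 d2"
  defines "E \<equiv> 2* f-2-d1-d2-a1+ of_nat N"
  shows "hypergeom_term N [f-1, (f+1)/2, a1, f/2+1, d1, d2, 2* f-2-d1-d2-a1+ of_nat N, - of_nat N]
           [(f-1)/2, f-a1, f/2-1, f-d1, f-d2, 2+a1+d1+d2-f- of_nat N, f+ of_nat N] 1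
     = ((f/2*(f/2-1) - E*(f-1-E))*((a1*(f-1-a1))* jr (f-1) (a1+1) d1 d2 N) + (a1*(f-1-a1) - f/2*(f/2-1))*((E*(f-1-E))* jr (f-1) a1 d1 d2 N))
     / ((f/2*(f/2-1))*(a1*(f-1-a1) - E*(f-1-E)))"
proof -
  from g have hf: "f \<notin> \<int>" and ha: "a1 \<notin> \<int>" and hfa: "f-a1 \<notin> \<int>" and h2: "2* f-a1-d1-d2 \<notin> \<int>"
    and hfadd: "f-a1-d1-d2 \<notin> \<int>" and hfd1: "f-d1 \<notin> \<int>" and hfd2: "f-d2 \<notin> \<int>"
    unfolding gen8_def by auto
  have e1: "1+2*(f-1)-(a1+1)-d1-d2+ of_nat N = E" unfolding E_def by (simp add: algebra_simps)
  have e2: "1+2*(f-1)-a1-d1-d2+ of_nat N = E+1" unfolding E_def by (simp add: algebra_simps)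
  have J1: "(\<Sum>k\<le>N. jt (f-1) (a1+1) d1 d2 E N k) = jr (f-1) (a1+1) d1 d2 N"
    unfolding e1[symmetric]
  proof (rule jackson)
    show "f-1 \<notin> \<int>" by (rule nonint_shift[OF hf]) (simp add: algebra_simps intsimps)
    show "f-1-(a1+1) \<notin> \<int>" by (rule nonint_shift[OF hfa]) (simp add: algebra_simps intsimps)
    show "f-1-d1 \<notin> \<int>" by (rule nonint_shift[OF hfd1]) (simp add: algebra_simps intsimps)
    show "f-1-d2 \<notin> \<int>" by (rule nonint_shift[OF hfd2]) (simp add: algebra_simps intsimps)
    show "f-1-(a1+1)-d1-d2 \<notin> \<int>" by (rule nonint_shift[OF hfadd]) (simp add: algebra_simps intsimps)
    show "2*(f-1)-(a1+1)-d1-d2 \<notin> \<int>" by (rule nonint_shift[OF h2]) (simp add: algebra_simps intsimps)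
  qed
  have J2: "(\<Sum>k\<le>N. jt (f-1) a1 d1 d2 (E+1) N k) = jr (f-1) a1 d1 d2 N"
    unfolding e2[symmetric]
  proof (rule jackson)
    show "f-1 \<notin> \<int>" by (rule nonint_shift[OF hf]) (simp add: algebra_simps intsimps)
    show "f-1-a1 \<notin> \<int>" by (rule nonint_shift[OF hfa]) (simp add: algebra_simps intsimps)
    show "f-1-d1 \<notin> \<int>" by (rule nonint_shift[OF hfd1]) (simp add: algebra_simps intsimps)
    show "f-1-d2 \<notin> \<int>" by (rule nonint_shift[OF hfd2]) (simp add: algebra_simps intsimps)
    show "f-1-a1-d1-d2 \<notin> \<int>" by (rule nonint_shift[OF hfadd]) (simp add: algebra_simps intsimps)
    show "2*(f-1)-a1-d1-d2 \<notin> \<int>" by (rule nonint_shift[OF h2]) (simp add: algebra_simps intsimps)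
  qed
  show ?thesis
    unfolding hypergeom_term_def E_def unfolding t8_decomp[OF g] unfolding E_def[symmetric] sum_comb J1 J2 ..
qed



lemma bigpoly: fixes g a1 d1 d2 n :: complex
  shows "((g*(g-1) - (2*(2* g)-2-d1-d2-a1+n)*((2* g)-1-(2*(2* g)-2-d1-d2-a1+n)))*(a1*((2* g)-1-a1))*(((2* g)-1-a1)+n)*((2* g)-a1-d1-1)*((2* g)-a1-d2-1)*(((2* g)-a1-d1-d2-1)+n)
     + (a1*((2* g)-1-a1) - g*(g-1))*((2*(2* g)-2-d1-d2-a1+n)*((2* g)-1-(2*(2* g)-2-d1-d2-a1+n)))*((2* g)-1-a1)*(((2* g)-a1-d1-1)+n)*(((2* g)-a1-d2-1)+n)*((2* g)-a1-d1-d2-1))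
     * ((g*((2* g)-1-d1-d2+n)*(1-g))*(1+d1+a1-(2* g))*(1+d2+a1-(2* g)))
   = (g*(g-1))*(a1*((2* g)-1-a1) - (2*(2* g)-2-d1-d2-a1+n)*((2* g)-1-(2*(2* g)-2-d1-d2-a1+n)))*((2* g)-1-a1)*((2* g)-a1-d1-1)*((2* g)-a1-d2-1)*(((2* g)-a1-d1-d2-1)+n)
     * ((g*((2* g)-1-d1-d2+n)*(1-g))*(1+d1+a1-(2* g))*(1+d2+a1-(2* g)) + n*((g*(g-1) - a1*(2*(2* g)-2-d1-d2-a1+n))* d1* d2 - (g*((2* g)-1-d1-d2+n)*(1-g))*(1+d1+d2+a1-(2* g))))"
  by algebra

lemma bigpoly_f: fixes f a1 d1 d2 n :: complex
  shows "((f/2*(f/2-1) - (2* f-2-d1-d2-a1+n)*(f-1-(2* f-2-d1-d2-a1+n)))*(a1*(f-1-a1))*((f-1-a1)+n)*(f-a1-d1-1)*(f-a1-d2-1)*((f-a1-d1-d2-1)+n)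
     + (a1*(f-1-a1) - f/2*(f/2-1))*((2* f-2-d1-d2-a1+n)*(f-1-(2* f-2-d1-d2-a1+n)))*(f-1-a1)*((f-a1-d1-1)+n)*((f-a1-d2-1)+n)*(f-a1-d1-d2-1))
     * ((f/2*(f-1-d1-d2+n)*(1-f/2))*(1+d1+a1-f)*(1+d2+a1-f))
   = (f/2*(f/2-1))*(a1*(f-1-a1) - (2* f-2-d1-d2-a1+n)*(f-1-(2* f-2-d1-d2-a1+n)))*(f-1-a1)*(f-a1-d1-1)*(f-a1-d2-1)*((f-a1-d1-d2-1)+n)
     * ((f/2*(f-1-d1-d2+n)*(1-f/2))*(1+d1+a1-f)*(1+d2+a1-f) + n*((f/2*(f/2-1) - a1*(2* f-2-d1-d2-a1+n))* d1* d2 - (f/2*(f-1-d1-d2+n)*(1-f/2))*(1+d1+d2+a1-f)))"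
proof -
  have h: "2*(f/2) = f" by simp
  show ?thesis using bigpoly[of "f/2" d1 d2 a1 n] unfolding h .
qed

lemma L1: fixes c1 c2 s1 s2 u n p1 p2 x1 x2 x3 q D :: complex
  assumes "u \<noteq> 0" "x1 \<noteq> 0" "x2 \<noteq> 0" "q \<noteq> 0" "D \<noteq> 0"
  shows "(c1*(s1*((u+n)/u)) + c2*(s2*((p1* p2* x3)/(x1* x2* q))))/D = (c1* s1*(u+n)* x1* x2* q + c2* s2* u* p1* p2* x3)/(D* u* x1* x2* q)"
  using assms by (simp add: field_simps)

lemma scalfin:
  fixes f a1 d1 d2 n :: complex
  defines "E \<equiv> 2* f-2-d1-d2-a1+n"
  assumes nz: "f/2*(f/2-1) \<noteq> 0" "a1*(f-1-a1) - E*(f-1-E) \<noteq> 0" "f-1-a1 \<noteq> 0" "f-a1-d1-1 \<noteq> 0" "f-a1-d2-1 \<noteq> 0"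
    "(f-a1-d1-d2-1)+n \<noteq> 0" "(f/2*(f-1-d1-d2+n)*(1-f/2))*(1+d1+a1-f)*(1+d2+a1-f) \<noteq> 0"
  shows "((f/2*(f/2-1) - E*(f-1-E))*((a1*(f-1-a1))*(((f-1-a1)+n)/(f-1-a1))) + (a1*(f-1-a1) - f/2*(f/2-1))*((E*(f-1-E))*((((f-a1-d1-1)+n)*((f-a1-d2-1)+n)*(f-a1-d1-d2-1))/((f-a1-d1-1)*(f-a1-d2-1)*((f-a1-d1-d2-1)+n)))))
     / ((f/2*(f/2-1))*(a1*(f-1-a1) - E*(f-1-E)))
   = ((f/2*(f-1-d1-d2+n)*(1-f/2))*(1+d1+a1-f)*(1+d2+a1-f) + n*((f/2*(f/2-1) - a1* E)* d1* d2 - (f/2*(f-1-d1-d2+n)*(1-f/2))*(1+d1+d2+a1-f)))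
     / ((f/2*(f-1-d1-d2+n)*(1-f/2))*(1+d1+a1-f)*(1+d2+a1-f))"
proof -
  have D: "(f/2*(f/2-1))*(a1*(f-1-a1) - E*(f-1-E)) \<noteq> 0" using nz by simp
  show ?thesis
    unfolding L1[OF nz(3) nz(4) nz(5) nz(6) D]
    apply (rule iffD2[OF frac_eq_eq])
    using D nz apply simp
    using nz(7) apply simp
    using bigpoly_f[of f d1 d2 a1 n] unfolding E_def by (simp only: mult_ac)
qed



lemma divmul_cancel: fixes X Y s :: complex assumes "s \<noteq> 0" shows "X/(Y* s)* s = X/Y"
  using assms by (simp add: field_simps)

lemma G4: fixes Pf P1 P2 Pdd Q Qd1 Qd2 Qm u n :: complex
  assumes "u \<noteq> 0" "u+n \<noteq> 0"
  shows "(Pf* P1* P2* Pdd)/(Q* Qd1* Qd2* Qm) = (Pf* Pdd* P1* P2)/(Qd1* Qd2*((u+n)* Q/u)* Qm) * ((u+n)/u)"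
proof -
  have 1: "Qd1* Qd2*((u+n)* Q/u)* Qm = (Q* Qd1* Qd2* Qm)*((u+n)/u)" by (simp add: mult_ac)
  have 2: "Pf* Pdd* P1* P2 = Pf* P1* P2* Pdd" by (simp only: mult_ac)
  have s: "(u+n)/u \<noteq> 0" using assms by simp
  show ?thesis unfolding 1 2 divmul_cancel[OF s] ..
qed

lemma G5: fixes Pf P1 P2 Pdd Qa Qd1 Qd2 Qm x1 x2 x3 n :: complex
  assumes "x1 \<noteq> 0" "x2 \<noteq> 0" "x3 \<noteq> 0" "x3+n \<noteq> 0"
  shows "(Pf*((x1+n)* P1/x1)*((x2+n)* P2/x2)* Pdd)/(Qa* Qd1* Qd2*((x3+n)* Qm/x3))
    = (Pf* Pdd* P1* P2)/(Qd1* Qd2* Qa* Qm) * (((x1+n)*(x2+n)* x3)/(x1* x2*(x3+n)))"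
proof -
  have 1: "Pf*((x1+n)* P1/x1)*((x2+n)* P2/x2)* Pdd = (Pf* Pdd* P1* P2)*((x1+n)/x1*((x2+n)/x2))" by (simp add: mult_ac)
  have 2: "Qa* Qd1* Qd2*((x3+n)* Qm/x3) = (Qd1* Qd2* Qa* Qm)*((x3+n)/x3)" by (simp add: mult_ac)
  have 3: "((x1+n)/x1*((x2+n)/x2))/((x3+n)/x3) = ((x1+n)*(x2+n)* x3)/(x1* x2*(x3+n))"
    using assms by (simp add: field_simps)
  show ?thesis unfolding 1 2 ratio_split 3 ..
qed

lemma jr_args:
  assumes "a' = 1+a" "p1 = 1+a-b-c" "p2 = 1+a-b-d" "p3 = 1+a-c-d" "q1 = 1+a-b" "q2 = 1+a-c" "q3 = 1+a-d" "q4 = 1+a-b-c-d"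
  shows "jr a b c d N = pochhammer a' N * pochhammer p1 N * pochhammer p2 N * pochhammer p3 N / (pochhammer q1 N * pochhammer q2 N * pochhammer q3 N * pochhammer q4 N)"
  unfolding jr_def assms ..

lemma jr1_Pt:
  fixes f a1 d1 d2 :: complex and N :: nat
  assumes nz: "f-1-a1 \<noteq> 0" "f-1-a1+ of_nat N \<noteq> 0"
  shows "jr (f-1) (a1+1) d1 d2 N = (pochhammer f N * pochhammer (f-d1-d2) N * pochhammer (f-a1-d1-1) N * pochhammer (f-a1-d2-1) N)
         / (pochhammer (f-d1) N * pochhammer (f-d2) N * pochhammer (f-a1) N * pochhammer (f-a1-d1-d2-1) N) * (((f-1-a1)+ of_nat N)/(f-1-a1))"
proof -
  have j: "jr (f-1) (a1+1) d1 d2 N = pochhammer f N * pochhammer (f-a1-d1-1) N * pochhammer (f-a1-d2-1) N * pochhammer (f-d1-d2) N / (pochhammer (f-1-a1) N * pochhammer (f-d1) N * pochhammer (f-d2) N * pochhammer (f-a1-d1-d2-1) N)"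
    by (rule jr_args) (simp_all add: algebra_simps)
  have p: "pochhammer (f-a1) N = ((f-1-a1)+ of_nat N)* pochhammer (f-1-a1) N/(f-1-a1)"
  proof -
    have "pochhammer (f-1-a1+1) N = ((f-1-a1)+ of_nat N)* pochhammer (f-1-a1) N/(f-1-a1)" by (rule poch_up[OF nz(1)])
    moreover have "f-1-a1+1 = f-a1" by simp
    ultimately show ?thesis by simp
  qed
  show ?thesis unfolding j p by (rule G4[OF nz])
qed

lemma jr2_Pt:
  fixes f a1 d1 d2 :: complex and N :: nat
  assumes nz: "f-a1-d1-1 \<noteq> 0" "f-a1-d2-1 \<noteq> 0" "f-a1-d1-d2-1 \<noteq> 0" "f-a1-d1-d2-1+ of_nat N \<noteq> 0"
  shows "jr (f-1) a1 d1 d2 N = (pochhammer f N * pochhammer (f-d1-d2) N * pochhammer (f-a1-d1-1) N * pochhammer (f-a1-d2-1) N)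
         / (pochhammer (f-d1) N * pochhammer (f-d2) N * pochhammer (f-a1) N * pochhammer (f-a1-d1-d2-1) N)
         * ((((f-a1-d1-1)+ of_nat N)*((f-a1-d2-1)+ of_nat N)*(f-a1-d1-d2-1))/((f-a1-d1-1)*(f-a1-d2-1)*((f-a1-d1-d2-1)+ of_nat N)))"
proof -
  have j: "jr (f-1) a1 d1 d2 N = pochhammer f N * pochhammer (f-a1-d1) N * pochhammer (f-a1-d2) N * pochhammer (f-d1-d2) N / (pochhammer (f-a1) N * pochhammer (f-d1) N * pochhammer (f-d2) N * pochhammer (f-a1-d1-d2) N)"
    by (rule jr_args) (simp_all add: algebra_simps)
  have pu: "\<And>x y::complex. x \<noteq> 0 \<Longrightarrow> y = x+1 \<Longrightarrow> pochhammer y N = (x+ of_nat N)* pochhammer x N/x"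
    using poch_up by simp
  have p1: "pochhammer (f-a1-d1) N = ((f-a1-d1-1)+ of_nat N)* pochhammer (f-a1-d1-1) N/(f-a1-d1-1)"
    by (rule pu[OF nz(1)]) simp
  have p2: "pochhammer (f-a1-d2) N = ((f-a1-d2-1)+ of_nat N)* pochhammer (f-a1-d2-1) N/(f-a1-d2-1)"
    by (rule pu[OF nz(2)]) simp
  have p3: "pochhammer (f-a1-d1-d2) N = ((f-a1-d1-d2-1)+ of_nat N)* pochhammer (f-a1-d1-d2-1) N/(f-a1-d1-d2-1)"
    by (rule pu[OF nz(3)]) simp
  show ?thesis unfolding j p1 p2 p3 by (rule G5[OF nz])
qed

lemma comb_fin: fixes c1 c2 s1 s2 P r1 r2 D :: complex
  shows "(c1*(s1*(P* r1)) + c2*(s2*(P* r2)))/D = P * ((c1*(s1* r1) + c2*(s2* r2))/D)"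
  by (simp add: algebra_simps)

theorem core:
  fixes f a1 d1 d2 :: complex and N :: nat
  assumes g: "gen8 f a1 d1 d2"
  shows "hypergeom_term N [f-1, (f+1)/2, a1, f/2+1, d1, d2, 2* f-2-d1-d2-a1+ of_nat N, - of_nat N]
           [(f-1)/2, f-a1, f/2-1, f-d1, f-d2, 2+a1+d1+d2-f- of_nat N, f+ of_nat N] 1
     = (pochhammer f N * pochhammer (f-d1-d2) N * pochhammer (f-a1-d1-1) N * pochhammer (f-a1-d2-1) N)
         / (pochhammer (f-d1) N * pochhammer (f-d2) N * pochhammer (f-a1) N * pochhammer (f-a1-d1-d2-1) N)
       * (((f/2*(f-1-d1-d2+ of_nat N)*(1-f/2))*(1+d1+a1-f)*(1+d2+a1-f) + of_nat N*((f/2*(f/2-1) - a1*(2* f-2-d1-d2-a1+ of_nat N))* d1* d2 - (f/2*(f-1-d1-d2+ of_nat N)*(1-f/2))*(1+d1+d2+a1-f)))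
     / ((f/2*(f-1-d1-d2+ of_nat N)*(1-f/2))*(1+d1+a1-f)*(1+d2+a1-f)))"
proof -
  define E where "E = 2* f-2-d1-d2-a1+ (of_nat N::complex)"
  from g have hf: "f \<notin> \<int>" and ha: "a1 \<notin> \<int>" and hfa: "f-a1 \<notin> \<int>" and h2: "2* f-a1-d1-d2 \<notin> \<int>"
    and hfadd: "f-a1-d1-d2 \<notin> \<int>" and h22: "2* f-2* a1-d1-d2 \<notin> \<int>" and hfdd: "f-d1-d2 \<notin> \<int>"
    and hfad1: "f-a1-d1 \<notin> \<int>" and hfad2: "f-a1-d2 \<notin> \<int>"
    unfolding gen8_def by auto
  have h2': "f/2-1 \<notin> \<int>" by (rule half2[OF hf])
  have nz2: "f/2-1 \<noteq> 0" by (rule nonint_nz[OF h2']) simp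
  have nz3: "f/2 \<noteq> 0" by (rule nonint_nz[OF h2']) simp
  have nz3': "1-f/2 \<noteq> 0" using nz2 by (simp add: eq_iff_diff_eq_0[symmetric])
  have q0: "f/2*(f/2-1) \<noteq> 0" using nz2 nz3 by simp
  have h22': "-(2* f-2* a1-d1-d2) \<notin> \<int>" by (rule neg_nonint[OF h22])
  have hfdd': "-(f-d1-d2) \<notin> \<int>" by (rule neg_nonint[OF hfdd])
  have nz11: "a1 - E \<noteq> 0" unfolding E_def by (rule nonint_nz[OF h22']) (simp add: algebra_simps intsimps)
  have nz12: "f-1-a1-E \<noteq> 0" unfolding E_def by (rule nonint_nz[OF hfdd']) (simp add: algebra_simps intsimps)
  have nz13: "a1*(f-1-a1) - E*(f-1-E) \<noteq> 0" unfolding s12 using nz11 nz12 by simp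
  have u1: "f-1-a1 \<noteq> 0" by (rule nonint_nz[OF hfa]) (simp add: algebra_simps intsimps)
  have u1n: "f-1-a1+ of_nat N \<noteq> 0" by (rule nonint_nz[OF hfa]) (simp add: algebra_simps intsimps)
  have x1: "f-a1-d1-1 \<noteq> 0" by (rule nonint_nz[OF hfad1]) (simp add: algebra_simps intsimps)
  have x2: "f-a1-d2-1 \<noteq> 0" by (rule nonint_nz[OF hfad2]) (simp add: algebra_simps intsimps)
  have x3: "f-a1-d1-d2-1 \<noteq> 0" by (rule nonint_nz[OF hfadd]) (simp add: algebra_simps intsimps)
  have x3n: "f-a1-d1-d2-1+ of_nat N \<noteq> 0" by (rule nonint_nz[OF hfadd]) (simp add: algebra_simps intsimps)
  have L: "f-1-d1-d2+ of_nat N \<noteq> 0" by (rule nonint_nz[OF hfdd]) (simp add: algebra_simps intsimps)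
  have X1: "1+d1+a1-f \<noteq> 0" using x1 by (simp add: algebra_simps)
  have X2: "1+d2+a1-f \<noteq> 0" using x2 by (simp add: algebra_simps)
  have AXX: "(f/2*(f-1-d1-d2+ of_nat N)*(1-f/2))*(1+d1+a1-f)*(1+d2+a1-f) \<noteq> 0"
    using nz3 L nz3' X1 X2 by simp
  show ?thesis
    unfolding sum8[OF g] jr1_Pt[OF u1 u1n] jr2_Pt[OF x1 x2 x3 x3n] comb_fin
    by (rule arg_cong[where f="\<lambda>x. _ * x"], rule scalfin) (use q0 nz13 u1 x1 x2 x3n AXX in \<open>simp_all add: E_def\<close>)
qed






lemma prod_split: "m \<le> N \<Longrightarrow> (\<Prod>b\<leftarrow>bs. pochhammer b N) = (\<Prod>b\<leftarrow>bs. pochhammer (b::complex) m) * (\<Prod>b\<leftarrow>bs. pochhammer (b + of_nat m) (N-m))"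
proof (induction bs)
  case Nil then show ?case by simp
next
  case (Cons b bs)
  have "pochhammer b N = pochhammer b m * pochhammer (b + of_nat m) (N-m)"
    using pochhammer_product[of m N b] Cons.prems by simp
  then show ?case using Cons by (simp add: mult_ac)
qed

lemma clear_sum:
  assumes "(\<Prod>b\<leftarrow>bs. pochhammer (b::complex) N) \<noteq> 0"
  shows "hypergeom_term N as bs 1 * (\<Prod>b\<leftarrow>bs. pochhammer b N)
       = (\<Sum>m\<le>N. (\<Prod>a\<leftarrow>as. pochhammer a m) * (\<Prod>b\<leftarrow>bs. pochhammer (b + of_nat m) (N-m)) / of_nat (fact m))"
  unfolding hypergeom_term_def sum_distrib_right
proof (rule sum.cong[OF refl])
  fix m assume "m \<in> {..N}"
  then have m: "m \<le> N" by simp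
  have s: "(\<Prod>b\<leftarrow>bs. pochhammer b N) = (\<Prod>b\<leftarrow>bs. pochhammer b m) * (\<Prod>b\<leftarrow>bs. pochhammer (b + of_nat m) (N-m))"
    by (rule prod_split[OF m])
  have nz: "(\<Prod>b\<leftarrow>bs. pochhammer b m) \<noteq> 0" using assms unfolding s by simp
  show "hyp_term as bs 1 m * (\<Prod>b\<leftarrow>bs. pochhammer b N) = (\<Prod>a\<leftarrow>as. pochhammer a m) * (\<Prod>b\<leftarrow>bs. pochhammer (b + of_nat m) (N-m)) / of_nat (fact m)"
    unfolding hyp_term_def s using nz by (simp add: field_simps)
qed

lemma countable_lin: fixes c \<beta> :: complex assumes "\<beta> \<noteq> 0" shows "countable {t. c + \<beta>* t \<in> \<int>}"
proof -
  have "{t. c + \<beta>* t \<in> \<int>} \<subseteq> (\<lambda>z. (z - c)/\<beta>) ` \<int>"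
  proof
    fix t assume "t \<in> {t. c + \<beta>* t \<in> \<int>}"
    then have "c + \<beta>* t \<in> \<int>" by simp
    moreover have "t = ((c + \<beta>* t) - c)/\<beta>" using assms by simp
    ultimately show "t \<in> (\<lambda>z. (z - c)/\<beta>) ` \<int>" by blast
  qed
  moreover have "countable ((\<lambda>z. (z - c)/\<beta>) ` (\<int>::complex set))"
    unfolding Ints_def by (intro countable_image) simp
  ultimately show ?thesis by (rule countable_subset)
qed

lemma islimpt_co_countable: fixes x :: complex assumes "countable B" shows "x islimpt (UNIV - B)"
  unfolding islimpt_approachable
proof (intro allI impI)
  fix e :: real assume e: "e > 0"
  have "uncountable (ball x e)" by (rule uncountable_ball[OF e])
  moreover have "countable (insert x B)" using assms by simp
  ultimately have "\<not> ball x e \<subseteq> insert x B" using countable_subset by blast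
  then obtain y where "y \<in> ball x e" "y \<notin> insert x B" by blast
  then show "\<exists>x'\<in>UNIV - B. x' \<noteq> x \<and> dist x' x < e" by (auto simp: dist_commute)
qed


definition hAS :: "complex \<Rightarrow> complex \<Rightarrow> complex \<Rightarrow> complex \<Rightarrow> nat \<Rightarrow> complex list" where
  "hAS f a1 d1 d2 N = [f-1, (f+1)/2, a1, f/2+1, d1, d2, 2* f-2-d1-d2-a1+ of_nat N, - of_nat N]"
definition hBS :: "complex \<Rightarrow> complex \<Rightarrow> complex \<Rightarrow> complex \<Rightarrow> nat \<Rightarrow> complex list" where
  "hBS f a1 d1 d2 N = [(f-1)/2, f-a1, f/2-1, f-d1, f-d2, 2+a1+d1+d2-f- of_nat N, f+ of_nat N]"
definition hAN :: "complex \<Rightarrow> complex \<Rightarrow> complex \<Rightarrow> complex \<Rightarrow> nat \<Rightarrow> complex" where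
  "hAN f a1 d1 d2 N = pochhammer f N * pochhammer (f-d1-d2) N * pochhammer (f-a1-d1-1) N * pochhammer (f-a1-d2-1) N"
definition hBN :: "complex \<Rightarrow> complex \<Rightarrow> complex \<Rightarrow> complex \<Rightarrow> nat \<Rightarrow> complex" where
  "hBN f a1 d1 d2 N = pochhammer (f-d1) N * pochhammer (f-d2) N * pochhammer (f-a1) N * pochhammer (f-a1-d1-d2-1) N"
definition hAX :: "complex \<Rightarrow> complex \<Rightarrow> complex \<Rightarrow> complex \<Rightarrow> nat \<Rightarrow> complex" where
  "hAX f a1 d1 d2 N = (f/2*(f-1-d1-d2+ of_nat N)*(1-f/2))*(1+d1+a1-f)*(1+d2+a1-f)"
definition hPN :: "complex \<Rightarrow> complex \<Rightarrow> complex \<Rightarrow> complex \<Rightarrow> nat \<Rightarrow> complex" where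
  "hPN f a1 d1 d2 N = (f/2*(f-1-d1-d2+ of_nat N)*(1-f/2))*(1+d1+a1-f)*(1+d2+a1-f) + of_nat N*((f/2*(f/2-1) - a1*(2* f-2-d1-d2-a1+ of_nat N))* d1* d2 - (f/2*(f-1-d1-d2+ of_nat N)*(1-f/2))*(1+d1+d2+a1-f))"
definition hCL :: "complex \<Rightarrow> complex \<Rightarrow> complex \<Rightarrow> complex \<Rightarrow> nat \<Rightarrow> complex" where
  "hCL f a1 d1 d2 N = (\<Sum>m\<le>N. (\<Prod>a\<leftarrow>hAS f a1 d1 d2 N. pochhammer a m) * (\<Prod>b\<leftarrow>hBS f a1 d1 d2 N. pochhammer (b + of_nat m) (N-m)) / of_nat (fact m))"
definition hFz :: "complex \<Rightarrow> complex \<Rightarrow> complex \<Rightarrow> complex \<Rightarrow> nat \<Rightarrow> complex" where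
  "hFz f a1 d1 d2 N = hCL f a1 d1 d2 N * hBN f a1 d1 d2 N * hAX f a1 d1 d2 N - (\<Prod>b\<leftarrow>hBS f a1 d1 d2 N. pochhammer b N) * hAN f a1 d1 d2 N * hPN f a1 d1 d2 N"

lemma nonint_nz': fixes x y :: complex shows "x \<notin> \<int> \<Longrightarrow> y - x \<in> \<int> \<Longrightarrow> y \<noteq> 0"
proof
  assume "x \<notin> \<int>" "y - x \<in> \<int>" "y = 0"
  then have "-x \<in> \<int>" by simp
  then have "x \<in> \<int>" using Ints_minus[of "-x"] by simp
  then show False using \<open>x \<notin> \<int>\<close> by simp
qed
lemma nonint_shift': fixes x y :: complex shows "x \<notin> \<int> \<Longrightarrow> y - x \<in> \<int> \<Longrightarrow> y \<notin> \<int>"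
proof
  assume "x \<notin> \<int>" "y - x \<in> \<int>" "y \<in> \<int>"
  then have "y - (y - x) \<in> \<int>" using Ints_diff by blast
  then show False using \<open>x \<notin> \<int>\<close> by simp
qed
lemma nonint_poch': fixes y :: complex shows "y \<notin> \<int> \<Longrightarrow> pochhammer y k \<noteq> 0"
  by (auto simp: pochhammer_eq_0_iff)
lemmas intsimps' = Ints_add Ints_diff Ints_minus Ints_mult Ints_of_nat Ints_1 Ints_0
lemma half1': fixes f :: complex shows "f \<notin> \<int> \<Longrightarrow> (f-1)/2 \<notin> \<int>"
proof
  assume "f \<notin> \<int>" "(f-1)/2 \<in> \<int>"
  then have "2*((f-1)/2)+1 \<in> \<int>" by (intro Ints_add Ints_mult Ints_1) auto
  moreover have "2*((f-1)/2)+1 = f" by (simp add: field_simps)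
  ultimately show False using \<open>f \<notin> \<int>\<close> by metis
qed
lemma half2': fixes f :: complex shows "f \<notin> \<int> \<Longrightarrow> f/2-1 \<notin> \<int>"
proof
  assume "f \<notin> \<int>" "f/2-1 \<in> \<int>"
  then have "2*(f/2-1)+2 \<in> \<int>" by (intro Ints_add Ints_mult) auto
  moreover have "2*(f/2-1)+2 = f" by simp
  ultimately show False using \<open>f \<notin> \<int>\<close> by metis
qed

lemma neg_nonint': fixes x :: complex assumes "x \<notin> \<int>" shows "-x \<notin> \<int>"
proof
  assume "-x \<in> \<int>"
  then have "-(-x) \<in> \<int>" by (rule Ints_minus)
  then show False using assms by simp
qed

lemma fin_alg: fixes H hAN hBN Dp hAX hPN :: complex
  assumes "hBN \<noteq> 0" "hAX \<noteq> 0" "H = hAN/hBN*(hPN/hAX)"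
  shows "(H* Dp)* hBN* hAX - Dp* hAN* hPN = 0"
  using assms by (simp add: field_simps)

lemma Fz_gen: assumes g: "gen8 f a1 d1 d2" shows "hFz f a1 d1 d2 N = 0"
proof -
  from g have hf: "f \<notin> \<int>" and ha: "a1 \<notin> \<int>" and hfa: "f-a1 \<notin> \<int>" and h2: "2* f-a1-d1-d2 \<notin> \<int>"
    and hfadd: "f-a1-d1-d2 \<notin> \<int>" and h22: "2* f-2* a1-d1-d2 \<notin> \<int>" and hfdd: "f-d1-d2 \<notin> \<int>"
    and hfad1: "f-a1-d1 \<notin> \<int>" and hfad2: "f-a1-d2 \<notin> \<int>" and hfd1: "f-d1 \<notin> \<int>" and hfd2: "f-d2 \<notin> \<int>"
    unfolding gen8_def by auto
  have hfadd': "-(f-a1-d1-d2) \<notin> \<int>" by (rule neg_nonint'[OF hfadd])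
  have l1: "(f-1)/2 \<notin> \<int>" by (rule half1'[OF hf])
  have l3: "f/2-1 \<notin> \<int>" by (rule half2'[OF hf])
  have l6: "2+a1+d1+d2-f- of_nat N \<notin> \<int>" by (rule nonint_shift'[OF hfadd']) (simp add: algebra_simps intsimps')
  have l7: "f + of_nat N \<notin> \<int>" by (rule nonint_shift'[OF hf]) (simp add: algebra_simps intsimps')
  have Dp: "(\<Prod>b\<leftarrow>hBS f a1 d1 d2 N. pochhammer b N) \<noteq> 0"
    unfolding hBS_def using nonint_poch'[OF l1] nonint_poch'[OF hfa] nonint_poch'[OF l3] nonint_poch'[OF hfd1]
      nonint_poch'[OF hfd2] nonint_poch'[OF l6] nonint_poch'[OF l7] by simp
  have x3: "f-a1-d1-d2-1 \<notin> \<int>" by (rule nonint_shift'[OF hfadd]) (simp add: algebra_simps intsimps')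
  have hBN: "hBN f a1 d1 d2 N \<noteq> 0"
    unfolding hBN_def using nonint_poch'[OF hfd1] nonint_poch'[OF hfd2] nonint_poch'[OF hfa] nonint_poch'[OF x3] by simp
  have nz2: "f/2-1 \<noteq> 0" by (rule nonint_nz'[OF l3]) simp
  have nz3: "f/2 \<noteq> 0" by (rule nonint_nz'[OF l3]) simp
  have nz3': "1-f/2 \<noteq> 0" using nz2 by (simp add: eq_iff_diff_eq_0[symmetric])
  have L: "f-1-d1-d2+ of_nat N \<noteq> 0" by (rule nonint_nz'[OF hfdd]) (simp add: algebra_simps intsimps')
  have x1: "f-a1-d1-1 \<noteq> 0" by (rule nonint_nz'[OF hfad1]) (simp add: algebra_simps intsimps')
  have x2: "f-a1-d2-1 \<noteq> 0" by (rule nonint_nz'[OF hfad2]) (simp add: algebra_simps intsimps')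
  have X1: "1+d1+a1-f \<noteq> 0" using x1 by (simp add: algebra_simps)
  have X2: "1+d2+a1-f \<noteq> 0" using x2 by (simp add: algebra_simps)
  have hAX: "hAX f a1 d1 d2 N \<noteq> 0" unfolding hAX_def using nz3 L nz3' X1 X2 by simp
  have c: "hypergeom_term N (hAS f a1 d1 d2 N) (hBS f a1 d1 d2 N) 1 * (\<Prod>b\<leftarrow>hBS f a1 d1 d2 N. pochhammer b N) = hCL f a1 d1 d2 N"
    unfolding hCL_def by (rule clear_sum[OF Dp])
  have h: "hypergeom_term N (hAS f a1 d1 d2 N) (hBS f a1 d1 d2 N) 1 = hAN f a1 d1 d2 N / hBN f a1 d1 d2 N * (hPN f a1 d1 d2 N / hAX f a1 d1 d2 N)"
    unfolding hAS_def hBS_def hAN_def hBN_def hPN_def hAX_def by (rule core[OF g])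
  show ?thesis unfolding hFz_def c[symmetric] by (rule fin_alg[OF hBN hAX h])
qed

lemma Fz_holo: "(\<lambda>t. hFz (f+t) (a1+10* t) (d1+100* t) (d2+1000* t) N) holomorphic_on UNIV"
  unfolding hFz_def hCL_def hAS_def hBS_def hAN_def hBN_def hAX_def hPN_def
  by (simp only: list.map prod_list.Cons prod_list.Nil) (intro holomorphic_intros; simp)


lemma nonint_from_eq: fixes x y :: complex shows "x \<notin> \<int> \<Longrightarrow> y = x \<Longrightarrow> y \<notin> \<int>" by simp

lemma Fz_all: "hFz f a1 d1 d2 N = 0"
proof -
  define \<phi> where "\<phi> = (\<lambda>t. hFz (f+t) (a1+10* t) (d1+100* t) (d2+1000* t) N)"
  define B where "B = {t. f + t \<in> \<int>} \<union> {t. a1 + 10* t \<in> \<int>} \<union> {t. (f-a1) + (-9)* t \<in> \<int>}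
     \<union> {t. (f-d1) + (-99)* t \<in> \<int>} \<union> {t. (f-d2) + (-999)* t \<in> \<int>} \<union> {t. (2* f-a1-d1-d2) + (-1108)* t \<in> \<int>}
     \<union> {t. (f-a1-d1-d2) + (-1109)* t \<in> \<int>} \<union> {t. (2* f-2* a1-d1-d2) + (-1118)* t \<in> \<int>}
     \<union> {t. (f-d1-d2) + (-1099)* t \<in> \<int>} \<union> {t. (f-a1-d1) + (-109)* t \<in> \<int>} \<union> {t. (f-a1-d2) + (-1009)* t \<in> \<int>}"
  have e1: "{t. f + t \<in> \<int>} = {t. f + 1* t \<in> \<int>}" by simp
  have cB: "countable B" unfolding B_def e1 by (intro countable_Un countable_lin) simp_all
  have g: "gen8 (f+t) (a1+10* t) (d1+100* t) (d2+1000* t)" if t: "t \<notin> B" for t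
  proof -
    have c0: "f+t \<notin> \<int>"
      by (rule nonint_from_eq[of "f + t"]) (use t in \<open>simp add: B_def\<close>, simp add: algebra_simps)
    have c1: "a1+10* t \<notin> \<int>"
      by (rule nonint_from_eq[of "a1 + 10* t"]) (use t in \<open>simp add: B_def\<close>, simp add: algebra_simps)
    have c2: "f+t-(a1+10* t) \<notin> \<int>"
      by (rule nonint_from_eq[of "(f-a1) + (-9)* t"]) (use t in \<open>simp add: B_def\<close>, simp add: algebra_simps)
    have c3: "f+t-(d1+100* t) \<notin> \<int>"
      by (rule nonint_from_eq[of "(f-d1) + (-99)* t"]) (use t in \<open>simp add: B_def\<close>, simp add: algebra_simps)
    have c4: "f+t-(d2+1000* t) \<notin> \<int>"
      by (rule nonint_from_eq[of "(f-d2) + (-999)* t"]) (use t in \<open>simp add: B_def\<close>, simp add: algebra_simps)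
    have c5: "2*(f+t)-(a1+10* t)-(d1+100* t)-(d2+1000* t) \<notin> \<int>"
      by (rule nonint_from_eq[of "(2* f-a1-d1-d2) + (-1108)* t"]) (use t in \<open>simp add: B_def\<close>, simp add: algebra_simps)
    have c6: "f+t-(a1+10* t)-(d1+100* t)-(d2+1000* t) \<notin> \<int>"
      by (rule nonint_from_eq[of "(f-a1-d1-d2) + (-1109)* t"]) (use t in \<open>simp add: B_def\<close>, simp add: algebra_simps)
    have c7: "2*(f+t)-2*(a1+10* t)-(d1+100* t)-(d2+1000* t) \<notin> \<int>"
      by (rule nonint_from_eq[of "(2* f-2* a1-d1-d2) + (-1118)* t"]) (use t in \<open>simp add: B_def\<close>, simp add: algebra_simps)
    have c8: "f+t-(d1+100* t)-(d2+1000* t) \<notin> \<int>"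
      by (rule nonint_from_eq[of "(f-d1-d2) + (-1099)* t"]) (use t in \<open>simp add: B_def\<close>, simp add: algebra_simps)
    have c9: "f+t-(a1+10* t)-(d1+100* t) \<notin> \<int>"
      by (rule nonint_from_eq[of "(f-a1-d1) + (-109)* t"]) (use t in \<open>simp add: B_def\<close>, simp add: algebra_simps)
    have c10: "f+t-(a1+10* t)-(d2+1000* t) \<notin> \<int>"
      by (rule nonint_from_eq[of "(f-a1-d2) + (-1009)* t"]) (use t in \<open>simp add: B_def\<close>, simp add: algebra_simps)
    show ?thesis unfolding gen8_def using c0 c1 c2 c3 c4 c5 c6 c7 c8 c9 c10 by blast
  qed
  have "\<phi> 0 = 0"
  proof (rule analytic_continuation[of \<phi> UNIV "UNIV - B" 0 0])
    show "\<phi> holomorphic_on UNIV" unfolding \<phi>_def by (rule Fz_holo)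
    show "0 islimpt (UNIV - B)" by (rule islimpt_co_countable[OF cB])
    show "\<phi> z = 0" if "z \<in> UNIV - B" for z
      unfolding \<phi>_def by (rule Fz_gen[OF g]) (use that in simp)
  qed auto
  then show ?thesis unfolding \<phi>_def by simp
qed

lemma poch_ratio: fixes k :: complex assumes "pochhammer k N \<noteq> 0" "k \<noteq> 0"
  shows "pochhammer (k+1) N / pochhammer k N = (k + of_nat N)/k"
proof -
  have "k * pochhammer (k+1) N = (k + of_nat N) * pochhammer k N"
    using pochhammer_rec[of k N] pochhammer_rec'[of k N] by simp
  then show ?thesis using assms by (simp add: field_simps)
qed

lemma ratio_k: fixes A B X1 X2 Y d1 d2 h k n :: complex
  assumes B: "B \<noteq> 0" and h: "h = A/B" and K: "d1* d2 - h* Y \<noteq> 0" and k: "k = h* X1* X2/(d1* d2 - h* Y)"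
    and hAX: "A* X1* X2 \<noteq> 0"
  shows "(A* X1* X2 + n*(B* d1* d2 - A* Y))/(A* X1* X2) = (k+n)/k"
proof -
  have A: "A \<noteq> 0" "X1 \<noteq> 0" "X2 \<noteq> 0" using hAX by auto
  have K': "B* d1* d2 - A* Y \<noteq> 0" using K B unfolding h by (simp add: field_simps)
  have k': "k = A* X1* X2/(B* d1* d2 - A* Y)" unfolding k h using B by (simp add: field_simps)
  show ?thesis unfolding k' using A B K' by (simp add: field_simps)
qed

lemma poch_nz_lower: fixes b :: complex shows "\<not> nonpos_int b \<Longrightarrow> pochhammer b N \<noteq> 0"
  unfolding nonpos_int_def by (auto simp: pochhammer_eq_0_iff)

theorem mainTheorem9:
  fixes N :: nat and f a1 d1 d2 h k :: complex
  assumes lower: "\<forall>b \<in> set [(f-1)/2, f-a1, f/2-1, f-d1, f-d2, 2+a1+d1+d2-f- of_nat N, f+ of_nat N].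
                    \<not> nonpos_int b"
    and hden: "f/2*(f/2-1) - a1*(2* f-2-d1-d2-a1+ of_nat N) \<noteq> 0"
    and h_def: "h = (f/2*(f-1-d1-d2+ of_nat N)*(1-f/2)) / (f/2*(f/2-1) - a1*(2* f-2-d1-d2-a1+ of_nat N))"
    and kden: "d1* d2 - h*(1+d1+d2+a1-f) \<noteq> 0"
    and k_def: "k = h*(1+d1+a1-f)*(1+d2+a1-f) / (d1* d2 - h*(1+d1+d2+a1-f))"
    and kpoch: "pochhammer k N \<noteq> 0"
  shows "hypergeom_term N
           [f-1, (f+1)/2, a1, f/2+1, d1, d2, 2* f-2-d1-d2-a1+ of_nat N, - of_nat N]
           [(f-1)/2, f-a1, f/2-1, f-d1, f-d2, 2+a1+d1+d2-f- of_nat N, f+ of_nat N] 1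
       = (pochhammer f N * pochhammer (f-d1-d2) N * pochhammer (f-a1-d1-1) N * pochhammer (f-a1-d2-1) N)
         / (pochhammer (f-d1) N * pochhammer (f-d2) N * pochhammer (f-a1) N * pochhammer (f-a1-d1-d2-1) N)
         * (pochhammer (k+1) N / pochhammer k N)"
proof (cases "N = 0")
  case True
  then show ?thesis by (simp add: hypergeom_term_def hyp_term_def)
next
  case False
  then have N1: "N \<ge> 1" by simp
  have Dp: "(\<Prod>b\<leftarrow>hBS f a1 d1 d2 N. pochhammer b N) \<noteq> 0"
    unfolding hBS_def using lower poch_nz_lower by simp
  have l6: "\<not> nonpos_int (2+a1+d1+d2-f- of_nat N)" using lower by simp
  have x3: "pochhammer (f-a1-d1-d2-1) N \<noteq> 0"
  proof
    assume "pochhammer (f-a1-d1-d2-1) N = 0"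
    then obtain j where j: "j < N" "f-a1-d1-d2-1 = - of_nat j" by (auto simp: pochhammer_eq_0_iff)
    have "2+a1+d1+d2-f- of_nat N = - of_nat (N - 1 - j)"
      using j by (simp add: of_nat_diff algebra_simps)
    then show False using l6 unfolding nonpos_int_def by blast
  qed
  have hBN: "hBN f a1 d1 d2 N \<noteq> 0" unfolding hBN_def using lower poch_nz_lower x3 by simp
  have hAX: "hAX f a1 d1 d2 N \<noteq> 0"
  proof
    assume a: "hAX f a1 d1 d2 N = 0"
    have "h*(1+d1+a1-f)*(1+d2+a1-f) = 0"
      using a unfolding hAX_def h_def by simp
    then have "k = 0" unfolding k_def by simp
    then show False using kpoch N1 by (simp add: pochhammer_0_left)
  qed
  have k0: "k \<noteq> 0" using kpoch N1 by (auto simp: pochhammer_0_left)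
  have F: "hCL f a1 d1 d2 N * hBN f a1 d1 d2 N * hAX f a1 d1 d2 N = (\<Prod>b\<leftarrow>hBS f a1 d1 d2 N. pochhammer b N) * hAN f a1 d1 d2 N * hPN f a1 d1 d2 N"
    using Fz_all[of f a1 d1 d2 N] unfolding hFz_def by simp
  have c: "hypergeom_term N (hAS f a1 d1 d2 N) (hBS f a1 d1 d2 N) 1 * (\<Prod>b\<leftarrow>hBS f a1 d1 d2 N. pochhammer b N) = hCL f a1 d1 d2 N"
    unfolding hCL_def by (rule clear_sum[OF Dp])
  have H: "hypergeom_term N (hAS f a1 d1 d2 N) (hBS f a1 d1 d2 N) 1 = hAN f a1 d1 d2 N / hBN f a1 d1 d2 N * (hPN f a1 d1 d2 N / hAX f a1 d1 d2 N)"
    using F unfolding c[symmetric] using Dp hBN hAX by (simp add: field_simps)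
  have R: "hPN f a1 d1 d2 N / hAX f a1 d1 d2 N = pochhammer (k+1) N / pochhammer k N"
    unfolding poch_ratio[OF kpoch k0] hPN_def hAX_def
    by (rule ratio_k[OF hden h_def kden k_def]) (use hAX in \<open>simp add: hAX_def\<close>)
  show ?thesis using H unfolding R hAS_def hBS_def hAN_def hBN_def .
qed


end
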